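(* Consider an $(M,K)$ product broadcast channel with one sender, $K$ intended receivers and one eavesdropper. For $j=1,\dots,M$ let $\mathcal{P}_j$ be the set of all conditional distributions $p'(y_{1j},\dots,y_{Kj},y_{ej}\mid x_j)$ whose conditional marginals $p'(y_{ij}\mid x_j)$ ($i=1,\dots,K$) and $p'(y_{ej}\mid x_j)$ coincide with those of the true channel $j$, and let $\mathcal{P}=\mathcal{P}_1\times\cdots\times\mathcal{P}_M$. Then the common-message-secrecy-capacity $C$ satisfies $$C\le \min_{\mathcal{P}}\ \max_{\prod_{j=1}^M p(x_j)}\ \min_{i\in\{1,\dots,K\}}\ \sum_{j=1}^M I(X_j;Y_{ij}\mid Y_{ej}),$$ where the outer minimum is over $(p'_1,\dots,p'_M)\in\mathcal{P}$, the maximum is over product input distributions, and each mutual information is evaluated under the joint distribution $p(x_j)\,p'_j(y_{1j},\dots,y_{Kj},y_{ej}\mid x_j)$.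
   Context: An $(M,K)$ product broadcast channel: one sender, $K$ intended receivers, one eavesdropper (index $e$), and $M$ parallel channels with finite input alphabet $\mathcal{X}$ and finite output alphabet $\mathcal{Y}$, memoryless and mutually independent: $\Pr(\{y_{1j}^n,\dots,y_{Kj}^n,y_{ej}^n\}_{j=1}^M\mid\{x_j^n\}_{j=1}^M)=\prod_{j=1}^M\prod_{t=1}^n \Pr(y_{1j}(t),\dots,y_{Kj}(t),y_{ej}(t)\mid x_j(t))$. Here $x_j^n$ is the input sequence on channel $j$ and $y_{ij}^n$ the output of receiver $i$ (or eavesdropper $i=e$) on channel $j$. An $(n,2^{nR})$ code consists of a message set $\{1,\dots,2^{nR}\}$, a possibly stochastic encoder mapping a message $W$ to $(x_1^n,\dots,x_M^n)\in(\mathcal{X}^n)^M$, and decoders $\Phi_{i,n}:(\mathcal{Y}^n)^M\to\{1,\dots,2^{nR}\}$ producing $\hat W_i$ from $(y_{i1}^n,\dots,y_{iM}^n)$, $i=1,\dots,K$. A rate $R$ is an achievable common-message-secrecy-rate if for every $\varepsilon>0$ there is a length-$n$ code with $\Pr(W\neq\hat W_i)\le\varepsilon$ for all $i$ and $\frac1n H(W\mid Y_{e1}^n,\dots,Y_{eM}^n)\ge R-\varepsilon$. The common-message-secrecy-capacity is the supremum of achievable rates. *)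

theory Defs
  imports Complex_Main "HOL-Library.FuncSet"
begin

(* Receivers are indexed 0..<K, channels 0..<M, time instants 0..<n.
   A per-letter channel j is V :: 'x => (nat => 'y) => 'y => real,
   V x ys z = Pr(receiver outputs ys (ys i for i<K), eavesdropper output z | input x). *)

definition Yr :: "nat \<Rightarrow> (nat \<Rightarrow> 'y) set" where
  "Yr K = PiE {0..<K} (\<lambda>_. UNIV)"

definition is_letter_channel :: "nat \<Rightarrow> ('x \<Rightarrow> (nat \<Rightarrow> 'y) \<Rightarrow> 'y \<Rightarrow> real) \<Rightarrow> bool" where
  "is_letter_channel K V \<longleftrightarrow>
     (\<forall>x. \<forall>ys\<in>Yr K. \<forall>z. 0 \<le> V x ys z) \<and>
     (\<forall>x. (\<Sum>ys\<in>Yr K. \<Sum>z\<in>UNIV. V x ys z) = 1)"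

definition seqs :: "nat \<Rightarrow> nat \<Rightarrow> (nat \<Rightarrow> nat \<Rightarrow> 'a) set" where
  "seqs M n = PiE {0..<M} (\<lambda>_. PiE {0..<n} (\<lambda>_. UNIV))"

definition rec_outs :: "nat \<Rightarrow> nat \<Rightarrow> nat \<Rightarrow> (nat \<Rightarrow> nat \<Rightarrow> nat \<Rightarrow> 'y) set" where
  "rec_outs K M n = PiE {0..<K} (\<lambda>_. seqs M n)"

definition prod_chan ::
  "nat \<Rightarrow> nat \<Rightarrow> nat \<Rightarrow> (nat \<Rightarrow> 'x \<Rightarrow> (nat \<Rightarrow> 'y) \<Rightarrow> 'y \<Rightarrow> real)
   \<Rightarrow> (nat \<Rightarrow> nat \<Rightarrow> 'x) \<Rightarrow> (nat \<Rightarrow> nat \<Rightarrow> nat \<Rightarrow> 'y) \<Rightarrow> (nat \<Rightarrow> nat \<Rightarrow> 'y) \<Rightarrow> real" where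
  "prod_chan K M n W c yr ye =
     (\<Prod>j<M. \<Prod>t<n. W j (c j t) (\<lambda>i\<in>{0..<K}. yr i j t) (ye j t))"

definition num_msgs :: "nat \<Rightarrow> real \<Rightarrow> nat" where
  "num_msgs n R = nat \<lceil>2 powr (real n * R)\<rceil>"

(* stochastic encoder: E w c = Pr(codeword c | message w) *)
definition valid_encoder :: "nat \<Rightarrow> nat \<Rightarrow> nat \<Rightarrow> (nat \<Rightarrow> (nat \<Rightarrow> nat \<Rightarrow> 'x) \<Rightarrow> real) \<Rightarrow> bool" where
  "valid_encoder M n N E \<longleftrightarrow>
     (\<forall>w\<in>{1..N}. (\<forall>c\<in>seqs M n. 0 \<le> E w c) \<and> (\<Sum>c\<in>seqs M n. E w c) = 1)"

definition valid_decoders :: "nat \<Rightarrow> nat \<Rightarrow> nat \<Rightarrow> nat \<Rightarrow> (nat \<Rightarrow> (nat \<Rightarrow> nat \<Rightarrow> 'y) \<Rightarrow> nat) \<Rightarrow> bool" where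
  "valid_decoders K M n N D \<longleftrightarrow> (\<forall>i<K. \<forall>y\<in>seqs M n. D i y \<in> {1..N})"

definition err_prob ::
  "nat \<Rightarrow> nat \<Rightarrow> nat \<Rightarrow> (nat \<Rightarrow> 'x \<Rightarrow> (nat \<Rightarrow> 'y) \<Rightarrow> 'y \<Rightarrow> real) \<Rightarrow> nat
   \<Rightarrow> (nat \<Rightarrow> (nat \<Rightarrow> nat \<Rightarrow> 'x) \<Rightarrow> real) \<Rightarrow> (nat \<Rightarrow> (nat \<Rightarrow> nat \<Rightarrow> 'y) \<Rightarrow> nat) \<Rightarrow> nat \<Rightarrow> real" where
  "err_prob K M n W N E D i =
     (1 / real N) * (\<Sum>w\<in>{1..N}. \<Sum>c\<in>seqs M n. \<Sum>yr\<in>rec_outs K M n. \<Sum>ye\<in>seqs M n.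
        E w c * prod_chan K M n W c yr ye * (if D i (yr i) \<noteq> w then 1 else 0))"

definition joint_WYe ::
  "nat \<Rightarrow> nat \<Rightarrow> nat \<Rightarrow> (nat \<Rightarrow> 'x \<Rightarrow> (nat \<Rightarrow> 'y) \<Rightarrow> 'y \<Rightarrow> real) \<Rightarrow> nat
   \<Rightarrow> (nat \<Rightarrow> (nat \<Rightarrow> nat \<Rightarrow> 'x) \<Rightarrow> real) \<Rightarrow> nat \<Rightarrow> (nat \<Rightarrow> nat \<Rightarrow> 'y) \<Rightarrow> real" where
  "joint_WYe K M n W N E w ye =
     (1 / real N) * (\<Sum>c\<in>seqs M n. E w c * (\<Sum>yr\<in>rec_outs K M n. prod_chan K M n W c yr ye))"

definition cond_ent_WYe ::
  "nat \<Rightarrow> nat \<Rightarrow> nat \<Rightarrow> (nat \<Rightarrow> 'x \<Rightarrow> (nat \<Rightarrow> 'y) \<Rightarrow> 'y \<Rightarrow> real) \<Rightarrow> nat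
   \<Rightarrow> (nat \<Rightarrow> (nat \<Rightarrow> nat \<Rightarrow> 'x) \<Rightarrow> real) \<Rightarrow> real" where
  "cond_ent_WYe K M n W N E =
     (\<Sum>w\<in>{1..N}. \<Sum>ye\<in>(seqs M n :: (nat \<Rightarrow> nat \<Rightarrow> 'y) set).
        (let p = joint_WYe K M n W N E w ye;
             pz = (\<Sum>w'\<in>{1..N}. joint_WYe K M n W N E w' ye)
         in if p = 0 then 0 else p * log 2 (pz / p)))"

definition achievable :: "nat \<Rightarrow> nat \<Rightarrow> (nat \<Rightarrow> 'x \<Rightarrow> (nat \<Rightarrow> 'y) \<Rightarrow> 'y \<Rightarrow> real) \<Rightarrow> real \<Rightarrow> bool" where
  "achievable K M W R \<longleftrightarrow>
     (\<forall>\<epsilon>>0. \<exists>n>0. \<exists>(E :: nat \<Rightarrow> (nat \<Rightarrow> nat \<Rightarrow> 'x) \<Rightarrow> real) (D :: nat \<Rightarrow> (nat \<Rightarrow> nat \<Rightarrow> 'y) \<Rightarrow> nat).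
        valid_encoder M n (num_msgs n R) E \<and>
        valid_decoders K M n (num_msgs n R) D \<and>
        (\<forall>i<K. err_prob K M n W (num_msgs n R) E D i \<le> \<epsilon>) \<and>
        cond_ent_WYe K M n W (num_msgs n R) E / real n \<ge> R - \<epsilon>)"

definition secrecy_capacity :: "nat \<Rightarrow> nat \<Rightarrow> (nat \<Rightarrow> 'x \<Rightarrow> (nat \<Rightarrow> 'y) \<Rightarrow> 'y \<Rightarrow> real) \<Rightarrow> real" where
  "secrecy_capacity K M W = Sup {R. achievable K M W R}"

definition cmi :: "('a::finite \<Rightarrow> 'b::finite \<Rightarrow> 'c::finite \<Rightarrow> real) \<Rightarrow> real" where
  "cmi q = (\<Sum>x\<in>UNIV. \<Sum>y\<in>UNIV. \<Sum>z\<in>UNIV.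
     (let pxz = (\<Sum>y'\<in>UNIV. q x y' z); pyz = (\<Sum>x'\<in>UNIV. q x' y z);
          pz = (\<Sum>x'\<in>UNIV. \<Sum>y'\<in>UNIV. q x' y' z)
      in if q x y z = 0 then 0 else q x y z * log 2 (q x y z * pz / (pxz * pyz))))"

definition joint_xyz :: "nat \<Rightarrow> ('x \<Rightarrow> real) \<Rightarrow> ('x \<Rightarrow> (nat \<Rightarrow> 'y) \<Rightarrow> 'y \<Rightarrow> real) \<Rightarrow> nat
    \<Rightarrow> 'x \<Rightarrow> 'y \<Rightarrow> 'y \<Rightarrow> real" where
  "joint_xyz K px V i x y z = px x * (\<Sum>ys\<in>Yr K. if ys i = y then V x ys z else 0)"

definition same_marginals :: "nat \<Rightarrow> ('x \<Rightarrow> (nat \<Rightarrow> 'y) \<Rightarrow> 'y \<Rightarrow> real) \<Rightarrow> ('x \<Rightarrow> (nat \<Rightarrow> 'y) \<Rightarrow> 'y \<Rightarrow> real) \<Rightarrow> bool" where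
  "same_marginals K V V' \<longleftrightarrow>
     (\<forall>x. \<forall>i<K. \<forall>y. (\<Sum>ys\<in>Yr K. \<Sum>z\<in>UNIV. if ys i = y then V' x ys z else 0)
                    = (\<Sum>ys\<in>Yr K. \<Sum>z\<in>UNIV. if ys i = y then V x ys z else 0)) \<and>
     (\<forall>x z. (\<Sum>ys\<in>Yr K. V' x ys z) = (\<Sum>ys\<in>Yr K. V x ys z))"

definition compatible_channels :: "nat \<Rightarrow> nat \<Rightarrow> (nat \<Rightarrow> 'x \<Rightarrow> (nat \<Rightarrow> 'y) \<Rightarrow> 'y \<Rightarrow> real)
    \<Rightarrow> (nat \<Rightarrow> 'x \<Rightarrow> (nat \<Rightarrow> 'y) \<Rightarrow> 'y \<Rightarrow> real) set" where
  "compatible_channels K M W = {P'. \<forall>j<M. is_letter_channel K (P' j) \<and> same_marginals K (W j) (P' j)}"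

definition input_dists :: "nat \<Rightarrow> (nat \<Rightarrow> 'x::finite \<Rightarrow> real) set" where
  "input_dists M = {p. \<forall>j<M. (\<forall>x. 0 \<le> p j x) \<and> (\<Sum>x\<in>UNIV. p j x) = 1}"

definition secrecy_bound :: "nat \<Rightarrow> nat \<Rightarrow> (nat \<Rightarrow> 'x::finite \<Rightarrow> (nat \<Rightarrow> 'y::finite) \<Rightarrow> 'y \<Rightarrow> real) \<Rightarrow> real" where
  "secrecy_bound K M W =
     (INF P'\<in>compatible_channels K M W. SUP p\<in>input_dists M.
        Min ((\<lambda>i. \<Sum>j<M. cmi (joint_xyz K (p j) (P' j) i)) ` {0..<K}))"

end

theory Submission imports Defs "HOL-Real_Asymp.Real_Asymp" begin

lemma seqs_alt: "seqs M n = PiE {..<M} (\<lambda>_. PiE {..<n} (\<lambda>_. UNIV))"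
  unfolding seqs_def by (simp add: atLeast0LessThan)

lemma sum_prod_PiE2:
  fixes F :: "nat \<Rightarrow> nat \<Rightarrow> 'a \<Rightarrow> real"
  assumes "finite B"
  shows "(\<Sum>u\<in>PiE {..<M} (\<lambda>_. PiE {..<n} (\<lambda>_. B)). \<Prod>j<M. \<Prod>t<n. F j t (u j t))
       = (\<Prod>j<M. \<Prod>t<n. \<Sum>b\<in>B. F j t b)"
proof -
  have "(\<Prod>j<M. \<Prod>t<n. \<Sum>b\<in>B. F j t b) = (\<Prod>j<M. \<Sum>g\<in>PiE {..<n} (\<lambda>_. B). \<Prod>t<n. F j t (g t))"
    using assms by (intro prod.cong refl prod_sum_PiE) auto
  also have "\<dots> = (\<Sum>u\<in>PiE {..<M} (\<lambda>_. PiE {..<n} (\<lambda>_. B)). \<Prod>j<M. \<Prod>t<n. F j t (u j t))"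
    using assms by (intro prod_sum_PiE) (auto intro: finite_PiE)
  finally show ?thesis by simp
qed

lemma seqs_sum_prod:
  fixes F :: "nat \<Rightarrow> nat \<Rightarrow> 'a::finite \<Rightarrow> real"
  shows "(\<Sum>y\<in>seqs M n. \<Prod>j<M. \<Prod>t<n. F j t (y j t)) = (\<Prod>j<M. \<Prod>t<n. \<Sum>a\<in>UNIV. F j t a)"
  unfolding seqs_alt by (rule sum_prod_PiE2) simp

lemma finite_seqs[simp]: "finite (seqs M n :: (nat \<Rightarrow> nat \<Rightarrow> 'a::finite) set)"
  unfolding seqs_def by (intro finite_PiE) auto

lemma finite_Yr[simp]: "finite (Yr K :: (nat \<Rightarrow> 'a::finite) set)"
  unfolding Yr_def by (intro finite_PiE) auto

lemma prod_mult_if: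
  fixes f :: "'a \<Rightarrow> real"
  assumes "finite A" "a0 \<in> A"
  shows "prod f A * g = (\<Prod>a\<in>A. if a = a0 then f a * g else f a)"
proof -
  have "prod f A = f a0 * prod f (A - {a0})" using assms by (simp add: prod.remove)
  moreover have "(\<Prod>a\<in>A. if a = a0 then f a * g else f a) = (f a0 * g) * (\<Prod>a\<in>A - {a0}. if a = a0 then f a * g else f a)"
    using assms by (subst prod.remove[of _ a0]) auto
  moreover have "(\<Prod>a\<in>A - {a0}. if a = a0 then f a * g else f a) = prod f (A - {a0})"
    by (intro prod.cong) auto
  ultimately show ?thesis by simp
qed

lemma seqs2_marg:
  fixes G :: "nat \<Rightarrow> nat \<Rightarrow> 'a::finite \<Rightarrow> 'b::finite \<Rightarrow> real" and \<psi> :: "'a \<Rightarrow> 'b \<Rightarrow> real"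
  assumes one: "\<And>j t. j < M \<Longrightarrow> t < n \<Longrightarrow> (\<Sum>a\<in>UNIV. \<Sum>b\<in>UNIV. G j t a b) = 1"
    and j0: "j0 < M" and t0: "t0 < n"
  shows "(\<Sum>y\<in>seqs M n. \<Sum>z\<in>seqs M n. (\<Prod>j<M. \<Prod>t<n. G j t (y j t) (z j t)) * \<psi> (y j0 t0) (z j0 t0))
       = (\<Sum>a\<in>UNIV. \<Sum>b\<in>UNIV. G j0 t0 a b * \<psi> a b)"
proof -
  define G' where "G' j t a b = (if j = j0 \<and> t = t0 then G j t a b * \<psi> a b else G j t a b)" for j t a b
  have eq: "(\<Prod>j<M. \<Prod>t<n. G j t (y j t) (z j t)) * \<psi> (y j0 t0) (z j0 t0)
        = (\<Prod>j<M. \<Prod>t<n. G' j t (y j t) (z j t))" for y z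
  proof -
    have "(\<Prod>j<M. \<Prod>t<n. G j t (y j t) (z j t)) * \<psi> (y j0 t0) (z j0 t0)
       = (\<Prod>j<M. if j = j0 then (\<Prod>t<n. G j t (y j t) (z j t)) * \<psi> (y j0 t0) (z j0 t0) else (\<Prod>t<n. G j t (y j t) (z j t)))"
      using j0 by (intro prod_mult_if) auto
    also have "\<dots> = (\<Prod>j<M. \<Prod>t<n. G' j t (y j t) (z j t))"
    proof (intro prod.cong refl)
      fix j assume "j \<in> {..<M}"
      show "(if j = j0 then (\<Prod>t<n. G j t (y j t) (z j t)) * \<psi> (y j0 t0) (z j0 t0) else (\<Prod>t<n. G j t (y j t) (z j t)))
          = (\<Prod>t<n. G' j t (y j t) (z j t))"
      proof (cases "j = j0")
        case True
        have "(\<Prod>t<n. G j t (y j t) (z j t)) * \<psi> (y j0 t0) (z j0 t0)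
           = (\<Prod>t<n. if t = t0 then G j t (y j t) (z j t) * \<psi> (y j0 t0) (z j0 t0) else G j t (y j t) (z j t))"
          using t0 by (intro prod_mult_if) auto
        also have "\<dots> = (\<Prod>t<n. G' j t (y j t) (z j t))"
          using True by (intro prod.cong) (auto simp: G'_def)
        finally show ?thesis using True by simp
      next
        case False
        then show ?thesis by (simp add: G'_def)
      qed
    qed
    finally show ?thesis .
  qed
  have "(\<Sum>y\<in>seqs M n. \<Sum>z\<in>seqs M n. (\<Prod>j<M. \<Prod>t<n. G j t (y j t) (z j t)) * \<psi> (y j0 t0) (z j0 t0))
      = (\<Sum>y\<in>seqs M n. \<Sum>z\<in>seqs M n. \<Prod>j<M. \<Prod>t<n. G' j t (y j t) (z j t))"
    by (simp add: eq)
  also have "\<dots> = (\<Sum>y\<in>seqs M n. \<Prod>j<M. \<Prod>t<n. \<Sum>b\<in>UNIV. G' j t (y j t) b)"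
    by (intro sum.cong refl) (rule seqs_sum_prod)
  also have "\<dots> = (\<Prod>j<M. \<Prod>t<n. \<Sum>a\<in>UNIV. \<Sum>b\<in>UNIV. G' j t a b)"
    by (rule seqs_sum_prod)
  also have "\<dots> = (\<Prod>j<M. \<Prod>t<n. if j = j0 \<and> t = t0 then (\<Sum>a\<in>UNIV. \<Sum>b\<in>UNIV. G j0 t0 a b * \<psi> a b) else 1)"
    using one by (intro prod.cong refl) (auto simp: G'_def)
  also have "\<dots> = (\<Prod>j<M. if j = j0 then (\<Sum>a\<in>UNIV. \<Sum>b\<in>UNIV. G j0 t0 a b * \<psi> a b) else 1)"
    using t0 by (intro prod.cong refl) (auto simp: prod.delta)
  also have "\<dots> = (\<Sum>a\<in>UNIV. \<Sum>b\<in>UNIV. G j0 t0 a b * \<psi> a b)"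
    using j0 by (simp add: prod.delta)
  finally show ?thesis .
qed


lemma ind_prod_eq:
  fixes u :: "nat \<Rightarrow> nat \<Rightarrow> nat \<Rightarrow> 'y" and y :: "nat \<Rightarrow> nat \<Rightarrow> 'y"
  assumes y: "y \<in> seqs M n"
  shows "(\<Prod>j<M. \<Prod>t<n. if u j t i0 = y j t then 1 else 0::real)
       = (if y = (\<lambda>j\<in>{0..<M}. \<lambda>t\<in>{0..<n}. u j t i0) then 1 else 0)"
proof (cases "y = (\<lambda>j\<in>{0..<M}. \<lambda>t\<in>{0..<n}. u j t i0)")
  case True
  then show ?thesis by simp
next
  case False
  have "\<exists>j<M. \<exists>t<n. y j t \<noteq> u j t i0"
  proof (rule ccontr)
    assume "\<not> ?thesis"
    then have "y = (\<lambda>j\<in>{0..<M}. \<lambda>t\<in>{0..<n}. u j t i0)"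
      using y unfolding seqs_def by (auto simp: fun_eq_iff PiE_iff extensional_def)
    with False show False by simp
  qed
  then obtain j t where jt: "j < M" "t < n" "y j t \<noteq> u j t i0" by blast
  have h0: "(\<Prod>t<n. if u j t i0 = y j t then 1 else 0::real) = 0"
    using jt by (intro prod_zero) (auto intro!: bexI[of _ t])
  have "(\<Prod>j<M. \<Prod>t<n. if u j t i0 = y j t then 1 else 0::real) = 0"
    by (rule prod_zero[OF finite_lessThan], rule bexI[of _ j]) (use jt h0 in auto)
  with False show ?thesis by simp
qed

lemma rec_outs_sum:
  fixes G :: "nat \<Rightarrow> nat \<Rightarrow> (nat \<Rightarrow> 'y::finite) \<Rightarrow> real" and f :: "(nat \<Rightarrow> nat \<Rightarrow> 'y) \<Rightarrow> real"
  assumes i0: "i0 < K"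
  shows "(\<Sum>yr\<in>rec_outs K M n. (\<Prod>j<M. \<Prod>t<n. G j t (\<lambda>i\<in>{0..<K}. yr i j t)) * f (yr i0))
       = (\<Sum>y\<in>seqs M n. f y * (\<Prod>j<M. \<Prod>t<n. \<Sum>ys\<in>Yr K. if ys i0 = y j t then G j t ys else 0))"
proof -
  define U where "U = PiE {..<M} (\<lambda>_. PiE {..<n} (\<lambda>_. Yr K :: (nat \<Rightarrow> 'y) set))"
  define pr where "pr u = (\<lambda>j\<in>{0..<M}. \<lambda>t\<in>{0..<n}. u j t i0)" for u :: "nat \<Rightarrow> nat \<Rightarrow> nat \<Rightarrow> 'y"
  have finU: "finite U" unfolding U_def by (intro finite_PiE) auto
  have step1: "(\<Sum>yr\<in>rec_outs K M n. (\<Prod>j<M. \<Prod>t<n. G j t (\<lambda>i\<in>{0..<K}. yr i j t)) * f (yr i0))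
      = (\<Sum>u\<in>U. (\<Prod>j<M. \<Prod>t<n. G j t (u j t)) * f (pr u))"
  proof (rule sum.reindex_bij_witness[of _ "\<lambda>u. \<lambda>i\<in>{0..<K}. \<lambda>j\<in>{0..<M}. \<lambda>t\<in>{0..<n}. u j t i"
          "\<lambda>yr. \<lambda>j\<in>{0..<M}. \<lambda>t\<in>{0..<n}. \<lambda>i\<in>{0..<K}. yr i j t"])
    fix a :: "nat \<Rightarrow> nat \<Rightarrow> nat \<Rightarrow> 'y" assume "a \<in> rec_outs K M n"
    then show "(\<lambda>i\<in>{0..<K}. \<lambda>j\<in>{0..<M}. \<lambda>t\<in>{0..<n}. (\<lambda>j\<in>{0..<M}. \<lambda>t\<in>{0..<n}. \<lambda>i\<in>{0..<K}. a i j t) j t i) = a"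
      unfolding rec_outs_def seqs_def by (auto simp: fun_eq_iff PiE_iff extensional_def)
  next
    fix a :: "nat \<Rightarrow> nat \<Rightarrow> nat \<Rightarrow> 'y" assume "a \<in> rec_outs K M n"
    then show "(\<lambda>j\<in>{0..<M}. \<lambda>t\<in>{0..<n}. \<lambda>i\<in>{0..<K}. a i j t) \<in> U"
      unfolding U_def Yr_def by (auto simp: PiE_iff)
  next
    fix b :: "nat \<Rightarrow> nat \<Rightarrow> nat \<Rightarrow> 'y" assume "b \<in> U"
    then show "(\<lambda>j\<in>{0..<M}. \<lambda>t\<in>{0..<n}. \<lambda>i\<in>{0..<K}. (\<lambda>i\<in>{0..<K}. \<lambda>j\<in>{0..<M}. \<lambda>t\<in>{0..<n}. b j t i) i j t) = b"
      unfolding U_def Yr_def by (auto simp: fun_eq_iff PiE_iff extensional_def)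
  next
    fix b :: "nat \<Rightarrow> nat \<Rightarrow> nat \<Rightarrow> 'y" assume "b \<in> U"
    then show "(\<lambda>i\<in>{0..<K}. \<lambda>j\<in>{0..<M}. \<lambda>t\<in>{0..<n}. b j t i) \<in> rec_outs K M n"
      unfolding rec_outs_def seqs_def by (auto simp: PiE_iff)
  next
    fix a :: "nat \<Rightarrow> nat \<Rightarrow> nat \<Rightarrow> 'y" assume a: "a \<in> rec_outs K M n"
    have "pr (\<lambda>j\<in>{0..<M}. \<lambda>t\<in>{0..<n}. \<lambda>i\<in>{0..<K}. a i j t) = a i0"
      using a i0 unfolding pr_def rec_outs_def seqs_def by (auto simp: fun_eq_iff PiE_iff extensional_def)
    moreover have "(\<Prod>j<M. \<Prod>t<n. G j t ((\<lambda>j\<in>{0..<M}. \<lambda>t\<in>{0..<n}. \<lambda>i\<in>{0..<K}. a i j t) j t))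
        = (\<Prod>j<M. \<Prod>t<n. G j t (\<lambda>i\<in>{0..<K}. a i j t))"
      by (intro prod.cong refl) auto
    ultimately show "(\<Prod>j<M. \<Prod>t<n. G j t ((\<lambda>j\<in>{0..<M}. \<lambda>t\<in>{0..<n}. \<lambda>i\<in>{0..<K}. a i j t) j t)) *
           f (pr (\<lambda>j\<in>{0..<M}. \<lambda>t\<in>{0..<n}. \<lambda>i\<in>{0..<K}. a i j t)) =
         (\<Prod>j<M. \<Prod>t<n. G j t (\<lambda>i\<in>{0..<K}. a i j t)) * f (a i0)" by simp
  qed
  have key: "(\<Prod>j<M. \<Prod>t<n. if u j t i0 = y j t then G j t (u j t) else 0)
        = (\<Prod>j<M. \<Prod>t<n. G j t (u j t)) * (if y = pr u then 1 else 0)"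
    if y: "y \<in> seqs M n" for y :: "nat \<Rightarrow> nat \<Rightarrow> 'y" and u :: "nat \<Rightarrow> nat \<Rightarrow> nat \<Rightarrow> 'y"
  proof -
    have "(\<Prod>j<M. \<Prod>t<n. if u j t i0 = y j t then G j t (u j t) else 0)
        = (\<Prod>j<M. \<Prod>t<n. G j t (u j t) * (if u j t i0 = y j t then 1 else 0))"
      by (intro prod.cong refl) auto
    also have "\<dots> = (\<Prod>j<M. \<Prod>t<n. G j t (u j t)) * (\<Prod>j<M. \<Prod>t<n. if u j t i0 = y j t then 1 else 0)"
      by (simp add: prod.distrib)
    also have "\<dots> = (\<Prod>j<M. \<Prod>t<n. G j t (u j t)) * (if y = pr u then 1 else 0)"
      using ind_prod_eq[OF y] unfolding pr_def by simp
    finally show ?thesis .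
  qed
  have prseq: "pr u \<in> seqs M n" for u unfolding pr_def seqs_def by auto
  have "(\<Sum>y\<in>seqs M n. f y * (\<Prod>j<M. \<Prod>t<n. \<Sum>ys\<in>Yr K. if ys i0 = y j t then G j t ys else 0))
      = (\<Sum>y\<in>seqs M n. f y * (\<Sum>u\<in>U. \<Prod>j<M. \<Prod>t<n. if u j t i0 = y j t then G j t (u j t) else 0))"
    unfolding U_def by (subst sum_prod_PiE2) auto
  also have "\<dots> = (\<Sum>y\<in>seqs M n. \<Sum>u\<in>U. f y * ((\<Prod>j<M. \<Prod>t<n. G j t (u j t)) * (if y = pr u then 1 else 0)))"
    by (intro sum.cong refl) (simp add: sum_distrib_left key)
  also have "\<dots> = (\<Sum>u\<in>U. \<Sum>y\<in>seqs M n. f y * ((\<Prod>j<M. \<Prod>t<n. G j t (u j t)) * (if y = pr u then 1 else 0)))"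
    by (rule sum.swap)
  also have "\<dots> = (\<Sum>u\<in>U. (\<Prod>j<M. \<Prod>t<n. G j t (u j t)) * f (pr u))"
  proof (intro sum.cong refl)
    fix u
    have "(\<Sum>y\<in>seqs M n. f y * ((\<Prod>j<M. \<Prod>t<n. G j t (u j t)) * (if y = pr u then 1 else 0)))
        = (\<Sum>y\<in>seqs M n. if y = pr u then f (pr u) * (\<Prod>j<M. \<Prod>t<n. G j t (u j t)) else 0)"
      by (intro sum.cong refl) auto
    also have "\<dots> = f (pr u) * (\<Prod>j<M. \<Prod>t<n. G j t (u j t))"
      using prseq[of u] by (simp add: sum.delta')
    finally show "(\<Sum>y\<in>seqs M n. f y * ((\<Prod>j<M. \<Prod>t<n. G j t (u j t)) * (if y = pr u then 1 else 0)))
        = (\<Prod>j<M. \<Prod>t<n. G j t (u j t)) * f (pr u)" by simp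
  qed
  finally show ?thesis using step1 by simp
qed


lemma sum_cond_all:
  fixes F :: "(nat \<Rightarrow> 'y::finite) \<Rightarrow> real"
  shows "(\<Sum>a\<in>UNIV. \<Sum>ys\<in>Yr K. if ys i = a then F ys else 0) = (\<Sum>ys\<in>Yr K. F ys)"
  by (subst sum.swap) (simp add: sum.delta)

definition pim :: "nat \<Rightarrow> nat \<Rightarrow> nat \<Rightarrow> (nat \<Rightarrow> (nat \<Rightarrow> nat \<Rightarrow> 'x) \<Rightarrow> real) \<Rightarrow> nat \<Rightarrow> nat \<Rightarrow> 'x \<Rightarrow> real" where
  "pim M n N E j t x = (\<Sum>w\<in>{1..N}. \<Sum>c\<in>seqs M n. if c j t = x then E w c / real N else 0)"

definition pbar :: "nat \<Rightarrow> nat \<Rightarrow> nat \<Rightarrow> (nat \<Rightarrow> (nat \<Rightarrow> nat \<Rightarrow> 'x) \<Rightarrow> real) \<Rightarrow> nat \<Rightarrow> 'x \<Rightarrow> real" where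
  "pbar M n N E j x = (\<Sum>t<n. pim M n N E j t x) / real n"

locale conv =
  fixes K M n N :: nat
    and P' W :: "nat \<Rightarrow> 'x::finite \<Rightarrow> (nat \<Rightarrow> 'y::finite) \<Rightarrow> 'y \<Rightarrow> real"
    and E :: "nat \<Rightarrow> (nat \<Rightarrow> nat \<Rightarrow> 'x) \<Rightarrow> real"
    and D :: "nat \<Rightarrow> (nat \<Rightarrow> nat \<Rightarrow> 'y) \<Rightarrow> nat"
    and i0 :: nat and eps :: real
  assumes P'ch: "\<And>j. j < M \<Longrightarrow> is_letter_channel K (P' j)"
    and marg: "\<And>j. j < M \<Longrightarrow> same_marginals K (W j) (P' j)"
    and enc: "valid_encoder M n N E"
    and dec: "valid_decoders K M n N D"
    and i0: "i0 < K" and npos: "0 < n" and Npos: "1 \<le> N"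
    and eps: "0 < eps" "eps < 1"
begin

definition "L j x a b = (\<Sum>ys\<in>Yr K. if ys i0 = a then P' j x ys b else 0)"
definition "e j x b = (\<Sum>a\<in>UNIV. L j x a b)"
definition "Aq c y z = (\<Prod>j<M. \<Prod>t<n. L j (c j t) (y j t) (z j t))"
definition "Q w c y z = E w c / real N * Aq c y z"
definition "ez c z = (\<Prod>j<M. \<Prod>t<n. e j (c j t) (z j t))"
definition "pWZ w z = (\<Sum>c\<in>seqs M n. E w c / real N * ez c z)"
definition "pZ z = (\<Sum>w\<in>{1..N}. pWZ w z)"

lemma L_nonneg: "j < M \<Longrightarrow> 0 \<le> L j x a b"
  using P'ch unfolding L_def is_letter_channel_def by (auto intro!: sum_nonneg)

lemma L_sum: "j < M \<Longrightarrow> (\<Sum>a\<in>UNIV. \<Sum>b\<in>UNIV. L j x a b) = 1"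
proof -
  assume j: "j < M"
  have "(\<Sum>a\<in>UNIV. \<Sum>b\<in>UNIV. L j x a b) = (\<Sum>a\<in>UNIV. \<Sum>ys\<in>Yr K. if ys i0 = a then (\<Sum>b\<in>UNIV. P' j x ys b) else 0)"
    unfolding L_def by (subst sum.swap) (auto intro!: sum.cong)
  also have "\<dots> = (\<Sum>ys\<in>Yr K. \<Sum>b\<in>UNIV. P' j x ys b)" by (rule sum_cond_all)
  also have "\<dots> = 1" using P'ch[OF j] unfolding is_letter_channel_def by simp
  finally show ?thesis .
qed

lemma e_nonneg: "j < M \<Longrightarrow> 0 \<le> e j x b"
  unfolding e_def by (auto intro!: sum_nonneg L_nonneg)

lemma e_eq: "j < M \<Longrightarrow> e j x b = (\<Sum>ys\<in>Yr K. W j x ys b)"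
proof -
  assume j: "j < M"
  have "e j x b = (\<Sum>ys\<in>Yr K. P' j x ys b)" unfolding e_def L_def by (rule sum_cond_all)
  also have "\<dots> = (\<Sum>ys\<in>Yr K. W j x ys b)" using marg[OF j] unfolding same_marginals_def by simp
  finally show ?thesis .
qed

lemma e_sum: "j < M \<Longrightarrow> (\<Sum>b\<in>UNIV. e j x b) = 1"
  unfolding e_def by (subst sum.swap) (rule L_sum)

lemma E_nonneg: "w \<in> {1..N} \<Longrightarrow> c \<in> seqs M n \<Longrightarrow> 0 \<le> E w c"
  using enc unfolding valid_encoder_def by auto

lemma E_sum: "w \<in> {1..N} \<Longrightarrow> (\<Sum>c\<in>seqs M n. E w c) = 1"
  using enc unfolding valid_encoder_def by auto

lemma Aq_nonneg: "c \<in> seqs M n \<Longrightarrow> 0 \<le> Aq c y z"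
  unfolding Aq_def by (auto intro!: prod_nonneg L_nonneg)

lemma Q_nonneg: "w \<in> {1..N} \<Longrightarrow> c \<in> seqs M n \<Longrightarrow> 0 \<le> Q w c y z"
  unfolding Q_def by (intro mult_nonneg_nonneg divide_nonneg_nonneg E_nonneg Aq_nonneg) auto

lemma ez_nonneg: "0 \<le> ez c z"
  unfolding ez_def by (auto intro!: prod_nonneg e_nonneg)

lemma Aq_sum_y: "(\<Sum>y\<in>seqs M n. Aq c y z) = ez c z"
  unfolding Aq_def ez_def e_def by (rule seqs_sum_prod)

lemma ez_sum: "(\<Sum>z\<in>seqs M n. ez c z) = 1"
  unfolding ez_def by (subst seqs_sum_prod) (simp add: e_sum)

lemma pWZ_nonneg: "w \<in> {1..N} \<Longrightarrow> 0 \<le> pWZ w z"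
  unfolding pWZ_def by (intro sum_nonneg mult_nonneg_nonneg divide_nonneg_nonneg E_nonneg ez_nonneg) auto

lemma pZ_nonneg: "0 \<le> pZ z"
  unfolding pZ_def by (auto intro!: sum_nonneg pWZ_nonneg)

lemma pWZ_sum: "w \<in> {1..N} \<Longrightarrow> (\<Sum>z\<in>seqs M n. pWZ w z) = 1 / real N"
proof -
  assume w: "w \<in> {1..N}"
  have "(\<Sum>z\<in>seqs M n. pWZ w z) = (\<Sum>c\<in>seqs M n. E w c / real N * (\<Sum>z\<in>seqs M n. ez c z))"
    unfolding pWZ_def by (subst sum.swap) (simp add: sum_distrib_left)
  also have "\<dots> = (\<Sum>c\<in>seqs M n. E w c) / real N" by (simp add: ez_sum sum_divide_distrib)
  finally show ?thesis using E_sum[OF w] by simp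
qed

lemma pZ_sum: "(\<Sum>z\<in>seqs M n. pZ z) = 1"
  unfolding pZ_def using Npos by (subst sum.swap) (simp add: pWZ_sum)

lemma Q_sum_cy: "(\<Sum>c\<in>seqs M n. \<Sum>y\<in>seqs M n. Q w c y z) = pWZ w z"
  unfolding Q_def pWZ_def by (intro sum.cong refl) (simp only: sum_distrib_left[symmetric] Aq_sum_y)

lemma Q_sum: "(\<Sum>w\<in>{1..N}. \<Sum>c\<in>seqs M n. \<Sum>y\<in>seqs M n. \<Sum>z\<in>seqs M n. Q w c y z) = 1"
proof -
  have "(\<Sum>w\<in>{1..N}. \<Sum>c\<in>seqs M n. \<Sum>y\<in>seqs M n. \<Sum>z\<in>seqs M n. Q w c y z)
     = (\<Sum>w\<in>{1..N}. \<Sum>z\<in>seqs M n. \<Sum>c\<in>seqs M n. \<Sum>y\<in>seqs M n. Q w c y z)"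
  proof (intro sum.cong refl)
    fix w
    have "(\<Sum>c\<in>seqs M n. \<Sum>y\<in>seqs M n. \<Sum>z\<in>seqs M n. Q w c y z) = (\<Sum>c\<in>seqs M n. \<Sum>z\<in>seqs M n. \<Sum>y\<in>seqs M n. Q w c y z)"
      by (rule sum.cong[OF refl]) (rule sum.swap)
    also have "\<dots> = (\<Sum>z\<in>seqs M n. \<Sum>c\<in>seqs M n. \<Sum>y\<in>seqs M n. Q w c y z)" by (rule sum.swap)
    finally show "(\<Sum>c\<in>seqs M n. \<Sum>y\<in>seqs M n. \<Sum>z\<in>seqs M n. Q w c y z) = (\<Sum>z\<in>seqs M n. \<Sum>c\<in>seqs M n. \<Sum>y\<in>seqs M n. Q w c y z)" .
  qed
  also have "\<dots> = (\<Sum>w\<in>{1..N}. \<Sum>z\<in>seqs M n. pWZ w z)" by (simp add: Q_sum_cy)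
  also have "\<dots> = 1" using pZ_sum unfolding pZ_def by (subst sum.swap) simp
  finally show ?thesis .
qed


lemma chan_sum_rec: "(\<Sum>yr\<in>rec_outs K M n. prod_chan K M n W c yr z) = ez c z"
proof -
  have "(\<Sum>yr\<in>rec_outs K M n. prod_chan K M n W c yr z)
      = (\<Sum>yr\<in>rec_outs K M n. (\<Prod>j<M. \<Prod>t<n. (\<lambda>j t ys. W j (c j t) ys (z j t)) j t (\<lambda>i\<in>{0..<K}. yr i j t)) * (\<lambda>_. 1) (yr i0))"
    unfolding prod_chan_def by simp
  also have "\<dots> = (\<Sum>y\<in>seqs M n. (\<lambda>_. 1) y * (\<Prod>j<M. \<Prod>t<n. \<Sum>ys\<in>Yr K. if ys i0 = y j t then (\<lambda>j t ys. W j (c j t) ys (z j t)) j t ys else 0))"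
    by (rule rec_outs_sum[OF i0])
  also have "\<dots> = (\<Prod>j<M. \<Prod>t<n. \<Sum>a\<in>UNIV. \<Sum>ys\<in>Yr K. if ys i0 = a then W j (c j t) ys (z j t) else 0)"
    using seqs_sum_prod[where F="\<lambda>j t a. \<Sum>ys\<in>Yr K. if ys i0 = a then W j (c j t) ys (z j t) else 0"] by simp
  also have "\<dots> = ez c z"
    unfolding ez_def by (intro prod.cong refl) (simp add: sum_cond_all e_eq)
  finally show ?thesis .
qed

lemma F1: "joint_WYe K M n W N E w z = pWZ w z"
  unfolding joint_WYe_def pWZ_def chan_sum_rec by (simp add: sum_distrib_left)

lemma marg1: "j < M \<Longrightarrow> (\<Sum>b\<in>UNIV. \<Sum>ys\<in>Yr K. if ys i0 = a then W j x ys b else 0) = (\<Sum>b\<in>UNIV. L j x a b)"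
proof -
  assume j: "j < M"
  have "(\<Sum>b\<in>UNIV. \<Sum>ys\<in>Yr K. if ys i0 = a then W j x ys b else 0) = (\<Sum>ys\<in>Yr K. \<Sum>b\<in>UNIV. if ys i0 = a then W j x ys b else 0)"
    by (rule sum.swap)
  also have "\<dots> = (\<Sum>ys\<in>Yr K. \<Sum>b\<in>UNIV. if ys i0 = a then P' j x ys b else 0)"
    using marg[OF j] i0 unfolding same_marginals_def by simp
  also have "\<dots> = (\<Sum>b\<in>UNIV. L j x a b)" unfolding L_def by (rule sum.swap)
  finally show ?thesis .
qed

lemma Aq_sum_z: "(\<Sum>z\<in>seqs M n. Aq c y z) = (\<Prod>j<M. \<Prod>t<n. \<Sum>b\<in>UNIV. L j (c j t) (y j t) b)"
  unfolding Aq_def by (rule seqs_sum_prod[where F="\<lambda>j t b. L j (c j t) (y j t) b"])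

lemma chan_err:
  fixes f :: "(nat \<Rightarrow> nat \<Rightarrow> 'y) \<Rightarrow> real"
  shows "(\<Sum>yr\<in>rec_outs K M n. \<Sum>ye\<in>seqs M n. prod_chan K M n W c yr ye * f (yr i0))
       = (\<Sum>y\<in>seqs M n. \<Sum>z\<in>seqs M n. Aq c y z * f y)"
proof -
  have "(\<Sum>yr\<in>rec_outs K M n. \<Sum>ye\<in>seqs M n. prod_chan K M n W c yr ye * f (yr i0))
      = (\<Sum>ye\<in>seqs M n. \<Sum>yr\<in>rec_outs K M n. prod_chan K M n W c yr ye * f (yr i0))"
    by (rule sum.swap)
  also have "\<dots> = (\<Sum>ye\<in>seqs M n. \<Sum>yr\<in>rec_outs K M n. (\<Prod>j<M. \<Prod>t<n. (\<lambda>j t ys. W j (c j t) ys (ye j t)) j t (\<lambda>i\<in>{0..<K}. yr i j t)) * f (yr i0))"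
    unfolding prod_chan_def by simp
  also have "\<dots> = (\<Sum>ye\<in>seqs M n. \<Sum>y\<in>seqs M n. f y * (\<Prod>j<M. \<Prod>t<n. \<Sum>ys\<in>Yr K. if ys i0 = y j t then (\<lambda>j t ys. W j (c j t) ys (ye j t)) j t ys else 0))"
    by (intro sum.cong refl rec_outs_sum[OF i0])
  also have "\<dots> = (\<Sum>y\<in>seqs M n. f y * (\<Sum>ye\<in>seqs M n. \<Prod>j<M. \<Prod>t<n. \<Sum>ys\<in>Yr K. if ys i0 = y j t then W j (c j t) ys (ye j t) else 0))"
    by (subst sum.swap) (simp add: sum_distrib_left)
  also have "\<dots> = (\<Sum>y\<in>seqs M n. f y * (\<Prod>j<M. \<Prod>t<n. \<Sum>b\<in>UNIV. \<Sum>ys\<in>Yr K. if ys i0 = y j t then W j (c j t) ys b else 0))"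
  proof (intro sum.cong refl arg_cong2[where f="(*)"])
    fix y :: "nat \<Rightarrow> nat \<Rightarrow> 'y"
    show "(\<Sum>ye\<in>seqs M n. \<Prod>j<M. \<Prod>t<n. \<Sum>ys\<in>Yr K. if ys i0 = y j t then W j (c j t) ys (ye j t) else 0)
       = (\<Prod>j<M. \<Prod>t<n. \<Sum>b\<in>UNIV. \<Sum>ys\<in>Yr K. if ys i0 = y j t then W j (c j t) ys b else 0)"
      by (rule seqs_sum_prod[where F="\<lambda>j t b. \<Sum>ys\<in>Yr K. if ys i0 = y j t then W j (c j t) ys b else 0"])
  qed
  also have "\<dots> = (\<Sum>y\<in>seqs M n. f y * (\<Prod>j<M. \<Prod>t<n. \<Sum>b\<in>UNIV. L j (c j t) (y j t) b))"
    by (rule sum.cong[OF refl], rule arg_cong2[where f="(*)"], rule refl, intro prod.cong refl) (simp add: marg1)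
  also have "\<dots> = (\<Sum>y\<in>seqs M n. f y * (\<Sum>z\<in>seqs M n. Aq c y z))"
    by (simp add: Aq_sum_z)
  also have "\<dots> = (\<Sum>y\<in>seqs M n. \<Sum>z\<in>seqs M n. Aq c y z * f y)"
    by (simp add: sum_distrib_left sum_distrib_right mult.commute)
  finally show ?thesis .
qed

definition ind :: "nat \<Rightarrow> (nat \<Rightarrow> nat \<Rightarrow> 'y) \<Rightarrow> real" where "ind w y = (if D i0 y \<noteq> w then 1 else 0)"

lemma F2: "err_prob K M n W N E D i0
   = (\<Sum>w\<in>{1..N}. \<Sum>c\<in>seqs M n. \<Sum>y\<in>seqs M n. \<Sum>z\<in>seqs M n. Q w c y z * ind w y)"
proof -
  have "err_prob K M n W N E D i0 = (\<Sum>w\<in>{1..N}. \<Sum>c\<in>seqs M n. E w c / real N *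
      (\<Sum>yr\<in>rec_outs K M n. \<Sum>ye\<in>seqs M n. prod_chan K M n W c yr ye * ind w (yr i0)))"
    unfolding err_prob_def ind_def
    by (simp add: sum_distrib_left sum_divide_distrib mult.assoc)
  also have "\<dots> = (\<Sum>w\<in>{1..N}. \<Sum>c\<in>seqs M n. E w c / real N * (\<Sum>y\<in>seqs M n. \<Sum>z\<in>seqs M n. Aq c y z * ind w y))"
    by (simp only: chan_err)
  also have "\<dots> = (\<Sum>w\<in>{1..N}. \<Sum>c\<in>seqs M n. \<Sum>y\<in>seqs M n. \<Sum>z\<in>seqs M n. Q w c y z * ind w y)"
    unfolding Q_def by (simp add: sum_distrib_left mult.assoc)
  finally show ?thesis .
qed


definition "qj j = joint_xyz K (pbar M n N E j) (P' j) i0"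
definition "pxz j x b = (\<Sum>a\<in>UNIV. qj j x a b)"
definition "pyz j a b = (\<Sum>x\<in>UNIV. qj j x a b)"
definition "pzz j b = (\<Sum>x\<in>UNIV. \<Sum>a\<in>UNIV. qj j x a b)"
definition "beta j a b = pyz j a b / pzz j b"
definition "phi j x a b = (if qj j x a b = 0 then 0 else log 2 (qj j x a b * pzz j b / (pxz j x b * pyz j a b)))"

lemma qj_eq: "qj j x a b = pbar M n N E j x * L j x a b"
  unfolding qj_def joint_xyz_def L_def by simp

lemma cmi_qj: "cmi (qj j) = (\<Sum>x\<in>UNIV. \<Sum>a\<in>UNIV. \<Sum>b\<in>UNIV. qj j x a b * phi j x a b)"
  unfolding cmi_def phi_def pxz_def pyz_def pzz_def Let_def
  by (intro sum.cong refl) auto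

lemma pim_nonneg: "0 \<le> pim M n N E j t x"
  unfolding pim_def by (intro sum_nonneg) (auto intro!: divide_nonneg_nonneg E_nonneg)

lemma pbar_nonneg: "0 \<le> pbar M n N E j x"
  unfolding pbar_def by (intro divide_nonneg_nonneg sum_nonneg pim_nonneg) auto

lemma enc_marg:
  fixes F :: "'x \<Rightarrow> real"
  shows "(\<Sum>w\<in>{1..N}. \<Sum>c\<in>seqs M n. E w c / real N * F (c j t)) = (\<Sum>x\<in>UNIV. pim M n N E j t x * F x)"
proof -
  have "(\<Sum>x\<in>UNIV. pim M n N E j t x * F x)
      = (\<Sum>x\<in>UNIV. \<Sum>w\<in>{1..N}. \<Sum>c\<in>seqs M n. if c j t = x then E w c / real N * F x else 0)"
    unfolding pim_def sum_distrib_right by (intro sum.cong refl) auto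
  also have "\<dots> = (\<Sum>w\<in>{1..N}. \<Sum>c\<in>seqs M n. \<Sum>x\<in>UNIV. if c j t = x then E w c / real N * F x else 0)"
    by (subst sum.swap) (simp add: sum.swap[of _ UNIV])
  also have "\<dots> = (\<Sum>w\<in>{1..N}. \<Sum>c\<in>seqs M n. E w c / real N * F (c j t))"
    by (simp add: sum.delta)
  finally show ?thesis by simp
qed

lemma pim_sum: "(\<Sum>x\<in>UNIV. pim M n N E j t x) = 1"
proof -
  have "(\<Sum>x\<in>UNIV. pim M n N E j t x) = (\<Sum>x\<in>UNIV. pim M n N E j t x * (\<lambda>_. 1) x)" by simp
  also have "\<dots> = (\<Sum>w\<in>{1..N}. \<Sum>c\<in>seqs M n. E w c / real N * (\<lambda>_. 1) (c j t))"
    by (rule enc_marg[symmetric])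
  also have "\<dots> = (\<Sum>w\<in>{1..N}. (\<Sum>c\<in>seqs M n. E w c) / real N)"
    by (simp add: sum_divide_distrib)
  also have "\<dots> = 1" using Npos by (simp add: E_sum)
  finally show ?thesis .
qed

lemma pbar_sum: "(\<Sum>x\<in>UNIV. pbar M n N E j x) = 1"
  unfolding pbar_def using npos by (simp add: sum_divide_distrib[symmetric]) (subst sum.swap, simp add: pim_sum)

lemma sum_swap3: "(\<Sum>a\<in>A. \<Sum>b\<in>B. \<Sum>p\<in>P. f a b p) = (\<Sum>p\<in>P. \<Sum>a\<in>A. \<Sum>b\<in>B. f a b p)"
proof -
  have "(\<Sum>a\<in>A. \<Sum>b\<in>B. \<Sum>p\<in>P. f a b p) = (\<Sum>a\<in>A. \<Sum>p\<in>P. \<Sum>b\<in>B. f a b p)"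
    by (rule sum.cong[OF refl], rule sum.swap)
  also have "\<dots> = (\<Sum>p\<in>P. \<Sum>a\<in>A. \<Sum>b\<in>B. f a b p)" by (rule sum.swap)
  finally show ?thesis .
qed

lemma sum_swap4: "(\<Sum>a\<in>A. \<Sum>b\<in>B. \<Sum>c\<in>C. \<Sum>p\<in>P. f a b c p) = (\<Sum>p\<in>P. \<Sum>a\<in>A. \<Sum>b\<in>B. \<Sum>c\<in>C. f a b c p)"
proof -
  have "(\<Sum>a\<in>A. \<Sum>b\<in>B. \<Sum>c\<in>C. \<Sum>p\<in>P. f a b c p) = (\<Sum>a\<in>A. \<Sum>p\<in>P. \<Sum>b\<in>B. \<Sum>c\<in>C. f a b c p)"
    by (rule sum.cong[OF refl], rule sum_swap3)
  also have "\<dots> = (\<Sum>p\<in>P. \<Sum>a\<in>A. \<Sum>b\<in>B. \<Sum>c\<in>C. f a b c p)" by (rule sum.swap)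
  finally show ?thesis .
qed

lemma sum_swap5: "(\<Sum>a\<in>A. \<Sum>b\<in>B. \<Sum>c\<in>C. \<Sum>d\<in>DD. \<Sum>p\<in>P. f a b c d p) = (\<Sum>p\<in>P. \<Sum>a\<in>A. \<Sum>b\<in>B. \<Sum>c\<in>C. \<Sum>d\<in>DD. f a b c d p)"
proof -
  have "(\<Sum>a\<in>A. \<Sum>b\<in>B. \<Sum>c\<in>C. \<Sum>d\<in>DD. \<Sum>p\<in>P. f a b c d p) = (\<Sum>a\<in>A. \<Sum>p\<in>P. \<Sum>b\<in>B. \<Sum>c\<in>C. \<Sum>d\<in>DD. f a b c d p)"
    by (rule sum.cong[OF refl], rule sum_swap4)
  also have "\<dots> = (\<Sum>p\<in>P. \<Sum>a\<in>A. \<Sum>b\<in>B. \<Sum>c\<in>C. \<Sum>d\<in>DD. f a b c d p)" by (rule sum.swap)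
  finally show ?thesis .
qed

lemma phi_jt:
  assumes j: "j < M" and t: "t < n"
  shows "(\<Sum>w\<in>{1..N}. \<Sum>c\<in>seqs M n. \<Sum>y\<in>seqs M n. \<Sum>z\<in>seqs M n. Q w c y z * phi j (c j t) (y j t) (z j t))
       = (\<Sum>x\<in>UNIV. pim M n N E j t x * (\<Sum>a\<in>UNIV. \<Sum>b\<in>UNIV. L j x a b * phi j x a b))"
proof -
  have "(\<Sum>w\<in>{1..N}. \<Sum>c\<in>seqs M n. \<Sum>y\<in>seqs M n. \<Sum>z\<in>seqs M n. Q w c y z * phi j (c j t) (y j t) (z j t))
      = (\<Sum>w\<in>{1..N}. \<Sum>c\<in>seqs M n. E w c / real N * (\<Sum>y\<in>seqs M n. \<Sum>z\<in>seqs M n.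
            (\<Prod>j<M. \<Prod>t<n. (\<lambda>j t. L j (c j t)) j t (y j t) (z j t)) * phi j (c j t) (y j t) (z j t)))"
    unfolding Q_def Aq_def by (simp add: sum_distrib_left mult.assoc)
  also have "\<dots> = (\<Sum>w\<in>{1..N}. \<Sum>c\<in>seqs M n. E w c / real N * (\<Sum>a\<in>UNIV. \<Sum>b\<in>UNIV. L j (c j t) a b * phi j (c j t) a b))"
    by (intro sum.cong refl arg_cong2[where f="(*)"] seqs2_marg[OF _ j t, where G="\<lambda>j t. L j (c j t)" for c, simplified])
       (simp add: L_sum)
  also have "\<dots> = (\<Sum>x\<in>UNIV. pim M n N E j t x * (\<Sum>a\<in>UNIV. \<Sum>b\<in>UNIV. L j x a b * phi j x a b))"
    by (rule enc_marg)
  finally show ?thesis .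
qed

lemma phi_eq:
  "(\<Sum>w\<in>{1..N}. \<Sum>c\<in>seqs M n. \<Sum>y\<in>seqs M n. \<Sum>z\<in>seqs M n. Q w c y z * (\<Sum>j<M. \<Sum>t<n. phi j (c j t) (y j t) (z j t)))
   = real n * (\<Sum>j<M. cmi (qj j))"
proof -
  have "(\<Sum>w\<in>{1..N}. \<Sum>c\<in>seqs M n. \<Sum>y\<in>seqs M n. \<Sum>z\<in>seqs M n. Q w c y z * (\<Sum>j<M. \<Sum>t<n. phi j (c j t) (y j t) (z j t)))
    = (\<Sum>w\<in>{1..N}. \<Sum>c\<in>seqs M n. \<Sum>y\<in>seqs M n. \<Sum>z\<in>seqs M n. \<Sum>j<M. \<Sum>t<n. Q w c y z * phi j (c j t) (y j t) (z j t))"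
    by (simp add: sum_distrib_left)
  also have "\<dots> = (\<Sum>j<M. \<Sum>w\<in>{1..N}. \<Sum>c\<in>seqs M n. \<Sum>y\<in>seqs M n. \<Sum>z\<in>seqs M n. \<Sum>t<n. Q w c y z * phi j (c j t) (y j t) (z j t))"
    by (rule sum_swap5)
  also have "\<dots> = (\<Sum>j<M. \<Sum>t<n. \<Sum>w\<in>{1..N}. \<Sum>c\<in>seqs M n. \<Sum>y\<in>seqs M n. \<Sum>z\<in>seqs M n. Q w c y z * phi j (c j t) (y j t) (z j t))"
    by (rule sum.cong[OF refl], rule sum_swap5)
  also have "\<dots> = (\<Sum>j<M. \<Sum>t<n. \<Sum>x\<in>UNIV. pim M n N E j t x * (\<Sum>a\<in>UNIV. \<Sum>b\<in>UNIV. L j x a b * phi j x a b))"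
    by (intro sum.cong refl phi_jt) auto
  also have "\<dots> = (\<Sum>j<M. \<Sum>x\<in>UNIV. (\<Sum>t<n. pim M n N E j t x) * (\<Sum>a\<in>UNIV. \<Sum>b\<in>UNIV. L j x a b * phi j x a b))"
    by (intro sum.cong refl) (simp add: sum.swap[of _ "{..<n}"] sum_distrib_right)
  also have "\<dots> = (\<Sum>j<M. \<Sum>x\<in>UNIV. real n * (\<Sum>a\<in>UNIV. \<Sum>b\<in>UNIV. qj j x a b * phi j x a b))"
  proof (intro sum.cong refl)
    fix j x
    have "(\<Sum>t<n. pim M n N E j t x) = real n * pbar M n N E j x" using npos by (simp add: pbar_def)
    then show "(\<Sum>t<n. pim M n N E j t x) * (\<Sum>a\<in>UNIV. \<Sum>b\<in>UNIV. L j x a b * phi j x a b)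
        = real n * (\<Sum>a\<in>UNIV. \<Sum>b\<in>UNIV. qj j x a b * phi j x a b)"
      by (simp add: qj_eq sum_distrib_left mult.assoc)
  qed
  also have "\<dots> = real n * (\<Sum>j<M. cmi (qj j))"
    by (simp add: cmi_qj sum_distrib_left)
  finally show ?thesis .
qed


lemma sum4_lin:
  fixes f h :: "'a \<Rightarrow> 'b \<Rightarrow> 'c \<Rightarrow> 'd \<Rightarrow> real"
  shows "(\<Sum>a\<in>A. \<Sum>b\<in>B. \<Sum>c\<in>C. \<Sum>d\<in>DD. f a b c d * \<alpha> + h a b c d * \<beta>)
     = \<alpha> * (\<Sum>a\<in>A. \<Sum>b\<in>B. \<Sum>c\<in>C. \<Sum>d\<in>DD. f a b c d) + (\<Sum>a\<in>A. \<Sum>b\<in>B. \<Sum>c\<in>C. \<Sum>d\<in>DD. h a b c d) * \<beta>"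
  by (simp add: sum.distrib sum_distrib_left sum_distrib_right mult.commute)

lemma H_eq: "cond_ent_WYe K M n W N E
   = (\<Sum>w\<in>{1..N}. \<Sum>c\<in>seqs M n. \<Sum>y\<in>seqs M n. \<Sum>z\<in>seqs M n. Q w c y z * log 2 (pZ z / pWZ w z))"
proof -
  have "cond_ent_WYe K M n W N E = (\<Sum>w\<in>{1..N}. \<Sum>z\<in>seqs M n. pWZ w z * log 2 (pZ z / pWZ w z))"
    unfolding cond_ent_WYe_def Let_def F1 pZ_def by (intro sum.cong refl) auto
  also have "\<dots> = (\<Sum>w\<in>{1..N}. \<Sum>z\<in>seqs M n. \<Sum>c\<in>seqs M n. \<Sum>y\<in>seqs M n. Q w c y z * log 2 (pZ z / pWZ w z))"
    by (simp add: Q_sum_cy[symmetric] sum_distrib_right)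
  also have "\<dots> = (\<Sum>w\<in>{1..N}. \<Sum>c\<in>seqs M n. \<Sum>y\<in>seqs M n. \<Sum>z\<in>seqs M n. Q w c y z * log 2 (pZ z / pWZ w z))"
    by (rule sum.cong[OF refl], rule sum_swap3[symmetric])
  finally show ?thesis .
qed

definition "g w y = (if D i0 y = w then 1 - eps else eps / real N)"

lemma g_pos: "0 < g w y"
  using eps Npos unfolding g_def by auto

lemma g_sum: assumes y: "y \<in> seqs M n" shows "(\<Sum>w\<in>{1..N}. g w y) \<le> 1"
proof -
  have D: "D i0 y \<in> {1..N}" using dec i0 y unfolding valid_decoders_def by auto
  have "(\<Sum>w\<in>{1..N}. g w y) = (\<Sum>w\<in>{1..N}. eps / real N + (if D i0 y = w then 1 - eps - eps / real N else 0))"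
    unfolding g_def by (intro sum.cong refl) auto
  also have "\<dots> = real N * (eps / real N) + (1 - eps - eps / real N)"
    using D by (simp add: sum.distrib sum.delta)
  also have "\<dots> = 1 - eps / real N" using Npos by simp
  also have "\<dots> \<le> 1" using eps Npos by simp
  finally show ?thesis .
qed

lemma g_log: "- log 2 (g w y) \<le> - log 2 (1 - eps) + ind w y * (- log 2 (eps / real N))"
proof -
  have a: "log 2 (1 - eps) \<le> 0" using eps by simp
  have b: "log 2 (eps / real N) \<le> 0" using eps Npos by (simp add: divide_le_eq_1)
  show ?thesis unfolding g_def ind_def using a b by auto
qed

lemma g_bound:
  assumes err: "err_prob K M n W N E D i0 \<le> eps"
  shows "(\<Sum>w\<in>{1..N}. \<Sum>c\<in>seqs M n. \<Sum>y\<in>seqs M n. \<Sum>z\<in>seqs M n. Q w c y z * (- log 2 (g w y)))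
     \<le> - log 2 (1 - eps) + eps * (- log 2 (eps / real N))"
proof -
  have b: "0 \<le> - log 2 (eps / real N)" using eps Npos by (simp add: divide_le_eq_1)
  have "(\<Sum>w\<in>{1..N}. \<Sum>c\<in>seqs M n. \<Sum>y\<in>seqs M n. \<Sum>z\<in>seqs M n. Q w c y z * (- log 2 (g w y)))
     \<le> (\<Sum>w\<in>{1..N}. \<Sum>c\<in>seqs M n. \<Sum>y\<in>seqs M n. \<Sum>z\<in>seqs M n.
            Q w c y z * (- log 2 (1 - eps)) + (Q w c y z * ind w y) * (- log 2 (eps / real N)))"
    by (intro sum_mono) (metis Q_nonneg g_log mult_left_mono distrib_left mult.assoc)
  also have "\<dots> = - log 2 (1 - eps) + err_prob K M n W N E D i0 * (- log 2 (eps / real N))"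
    unfolding F2 sum4_lin Q_sum by simp
  also have "\<dots> \<le> - log 2 (1 - eps) + eps * (- log 2 (eps / real N))"
    using mult_right_mono[OF err b] by simp
  finally show ?thesis .
qed


lemma qj_nonneg: "j < M \<Longrightarrow> 0 \<le> qj j x a b"
  unfolding qj_eq by (intro mult_nonneg_nonneg pbar_nonneg L_nonneg)

lemma pyz_nonneg: "j < M \<Longrightarrow> 0 \<le> pyz j a b"
  unfolding pyz_def by (intro sum_nonneg qj_nonneg)

lemma pzz_nonneg: "j < M \<Longrightarrow> 0 \<le> pzz j b"
  unfolding pzz_def by (intro sum_nonneg qj_nonneg)

lemma beta_nonneg: "j < M \<Longrightarrow> 0 \<le> beta j a b"
  unfolding beta_def by (intro divide_nonneg_nonneg pyz_nonneg pzz_nonneg)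

lemma pxz_eq: "pxz j x b = pbar M n N E j x * e j x b"
  unfolding pxz_def e_def qj_eq by (simp add: sum_distrib_left)

lemma beta_sum: "j < M \<Longrightarrow> (\<Sum>a\<in>UNIV. beta j a b) \<le> 1"
proof -
  assume j: "j < M"
  have "(\<Sum>a\<in>UNIV. beta j a b) = (\<Sum>a\<in>UNIV. pyz j a b) / pzz j b"
    unfolding beta_def by (simp add: sum_divide_distrib)
  also have "(\<Sum>a\<in>UNIV. pyz j a b) = pzz j b"
    unfolding pyz_def pzz_def by (rule sum.swap)
  finally show ?thesis by simp
qed

definition "Bz y z = (\<Prod>j<M. \<Prod>t<n. beta j (y j t) (z j t))"

lemma Bz_nonneg: "0 \<le> Bz y z"
  unfolding Bz_def by (intro prod_nonneg beta_nonneg) auto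

lemma Bz_sum: "(\<Sum>y\<in>seqs M n. Bz y z) \<le> 1"
proof -
  have "(\<Sum>y\<in>seqs M n. Bz y z) = (\<Prod>j<M. \<Prod>t<n. \<Sum>a\<in>UNIV. beta j a (z j t))"
    unfolding Bz_def by (rule seqs_sum_prod[where F="\<lambda>j t a. beta j a (z j t)"])
  also have "\<dots> \<le> 1"
    by (intro prod_le_1 conjI prod_nonneg sum_nonneg beta_nonneg beta_sum) auto
  finally show ?thesis .
qed

lemma log_prod2:
  fixes f :: "'a \<Rightarrow> real"
  assumes "finite A" "\<And>a. a \<in> A \<Longrightarrow> 0 < f a"
  shows "log b (prod f A) = (\<Sum>a\<in>A. log b (f a))"
proof -
  have "ln (prod f A) = (\<Sum>a\<in>A. ln (f a))" by (rule ln_prod) (use assms in force)+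
  then show ?thesis unfolding log_def by (simp add: sum_divide_distrib)
qed

lemma supp:
  assumes w: "w \<in> {1..N}" and c: "c \<in> seqs M n" and Qp: "Q w c y z \<noteq> 0"
  shows "0 < E w c" "0 < Aq c y z"
    and "\<And>j t. j < M \<Longrightarrow> t < n \<Longrightarrow> 0 < L j (c j t) (y j t) (z j t)"
    and "\<And>j t. j < M \<Longrightarrow> t < n \<Longrightarrow> 0 < pbar M n N E j (c j t)"
proof -
  have E0: "0 \<le> E w c" using E_nonneg w c .
  have A0: "0 \<le> Aq c y z" using Aq_nonneg c .
  from Qp have Enz: "E w c \<noteq> 0" and Anz: "Aq c y z \<noteq> 0" unfolding Q_def by auto
  with E0 A0 show Ep: "0 < E w c" and Ap: "0 < Aq c y z" by auto
  have allL: "\<forall>j<M. \<forall>t<n. L j (c j t) (y j t) (z j t) \<noteq> 0"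
    using Anz unfolding Aq_def by (simp add: prod_zero_iff)
  show "0 < L j (c j t) (y j t) (z j t)" if j: "j < M" and t: "t < n" for j t
  proof -
    have "L j (c j t) (y j t) (z j t) \<noteq> 0" using allL j t by blast
    then show ?thesis using L_nonneg[OF j] by (simp add: order_le_neq_trans)
  qed
  show "0 < pbar M n N E j (c j t)" if j: "j < M" and t: "t < n" for j t
  proof -
    have "E w c / real N = (if c j t = c j t then E w c / real N else 0)" by simp
    also have "\<dots> \<le> (\<Sum>c'\<in>seqs M n. if c' j t = c j t then E w c' / real N else 0)"
      by (rule member_le_sum[OF c, where f="\<lambda>c'. if c' j t = c j t then E w c' / real N else 0"])
         (auto intro!: divide_nonneg_nonneg E_nonneg w)
    also have "\<dots> \<le> pim M n N E j t (c j t)"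
      unfolding pim_def
      by (rule member_le_sum[OF w, where f="\<lambda>w. \<Sum>c'\<in>seqs M n. if c' j t = c j t then E w c' / real N else 0"])
         (auto intro!: sum_nonneg divide_nonneg_nonneg E_nonneg)
    finally have p0: "E w c / real N \<le> pim M n N E j t (c j t)" .
    have "0 < E w c / real N" using Ep Npos by (intro divide_pos_pos) auto
    with p0 have p1: "0 < pim M n N E j t (c j t)" by linarith
    have "pim M n N E j t (c j t) \<le> (\<Sum>s<n. pim M n N E j s (c j t))"
      using t by (intro member_le_sum pim_nonneg) auto
    with p1 have "0 < (\<Sum>s<n. pim M n N E j s (c j t))" by linarith
    then show ?thesis unfolding pbar_def using npos by (intro divide_pos_pos) auto
  qed
qed


lemma pointwise:
  assumes w: "w \<in> {1..N}" and c: "c \<in> seqs M n"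
  shows "Q w c y z * (log 2 (pZ z / pWZ w z) + log 2 (g w y) - (\<Sum>j<M. \<Sum>t<n. phi j (c j t) (y j t) (z j t)))
    \<le> (E w c / real N * pZ z * g w y * ez c z * Bz y z / pWZ w z - Q w c y z) / ln 2"
proof (cases "Q w c y z = 0")
  case True
  have "0 \<le> E w c / real N * pZ z * g w y * ez c z * Bz y z / pWZ w z"
    by (intro mult_nonneg_nonneg divide_nonneg_nonneg E_nonneg w c pZ_nonneg ez_nonneg Bz_nonneg
          pWZ_nonneg less_imp_le[OF g_pos]) auto
  then have "0 \<le> (E w c / real N * pZ z * g w y * ez c z * Bz y z / pWZ w z) / ln 2"
    by (rule divide_nonneg_pos) simp
  then show ?thesis using True by simp
next
  case False
  note S = supp[OF w c False]
  define r where "r j t = L j (c j t) (y j t) (z j t) / (e j (c j t) (z j t) * beta j (y j t) (z j t))" for j t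
  have Lp: "0 < L j (c j t) (y j t) (z j t)" if "j < M" "t < n" for j t using S(3) that .
  have ep: "0 < e j (c j t) (z j t)" if jt: "j < M" "t < n" for j t
  proof -
    have "L j (c j t) (y j t) (z j t) \<le> e j (c j t) (z j t)"
      unfolding e_def using jt by (intro member_le_sum L_nonneg) auto
    then show ?thesis using Lp[OF jt] by linarith
  qed
  have qp: "0 < qj j (c j t) (y j t) (z j t)" if jt: "j < M" "t < n" for j t
    unfolding qj_eq using S(4)[OF jt] Lp[OF jt] by simp
  have pyp: "0 < pyz j (y j t) (z j t)" if jt: "j < M" "t < n" for j t
  proof -
    have "qj j (c j t) (y j t) (z j t) \<le> pyz j (y j t) (z j t)"
      unfolding pyz_def using jt by (intro member_le_sum qj_nonneg) auto
    then show ?thesis using qp[OF jt] by linarith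
  qed
  have pxp: "0 < pxz j (c j t) (z j t)" if jt: "j < M" "t < n" for j t
    unfolding pxz_eq using S(4)[OF jt] ep[OF jt] by simp
  have pzp: "0 < pzz j (z j t)" if jt: "j < M" "t < n" for j t
  proof -
    have "pzz j (z j t) = (\<Sum>x\<in>UNIV. pxz j x (z j t))" unfolding pzz_def pxz_def by simp
    also have "pxz j (c j t) (z j t) \<le> \<dots>"
      using jt by (intro member_le_sum) (auto simp: pxz_def intro!: sum_nonneg qj_nonneg)
    finally show ?thesis using pxp[OF jt] by linarith
  qed
  have bp: "0 < beta j (y j t) (z j t)" if jt: "j < M" "t < n" for j t
    unfolding beta_def using pyp[OF jt] pzp[OF jt] by simp
  have rp: "0 < r j t" if jt: "j < M" "t < n" for j t
    unfolding r_def using Lp[OF jt] ep[OF jt] bp[OF jt] by simp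
  have phir: "phi j (c j t) (y j t) (z j t) = log 2 (r j t)" if jt: "j < M" "t < n" for j t
  proof -
    have "qj j (c j t) (y j t) (z j t) * pzz j (z j t) / (pxz j (c j t) (z j t) * pyz j (y j t) (z j t)) = r j t"
      unfolding r_def qj_eq pxz_eq beta_def
      using S(4)[OF jt] ep[OF jt] pyp[OF jt] pzp[OF jt] by (simp add: field_simps)
    then show ?thesis unfolding phi_def using qp[OF jt] by simp
  qed
  have sumphi: "(\<Sum>j<M. \<Sum>t<n. phi j (c j t) (y j t) (z j t)) = log 2 (\<Prod>j<M. \<Prod>t<n. r j t)"
  proof -
    have "(\<Sum>j<M. \<Sum>t<n. phi j (c j t) (y j t) (z j t)) = (\<Sum>j<M. log 2 (\<Prod>t<n. r j t))"
    proof (intro sum.cong refl)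
      fix j assume "j \<in> {..<M}"
      then have j: "j < M" by simp
      have "(\<Sum>t<n. phi j (c j t) (y j t) (z j t)) = (\<Sum>t<n. log 2 (r j t))"
        using j by (intro sum.cong refl) (simp add: phir)
      also have "\<dots> = log 2 (\<Prod>t<n. r j t)"
        by (rule log_prod2[symmetric]) (use j rp in auto)
      finally show "(\<Sum>t<n. phi j (c j t) (y j t) (z j t)) = log 2 (\<Prod>t<n. r j t)" .
    qed
    also have "\<dots> = log 2 (\<Prod>j<M. \<Prod>t<n. r j t)"
      by (rule log_prod2[symmetric]) (auto intro!: prod_pos rp)
    finally show ?thesis .
  qed
  have Rp: "0 < (\<Prod>j<M. \<Prod>t<n. r j t)" by (auto intro!: prod_pos rp)
  have ezp: "0 < ez c z" unfolding ez_def by (auto intro!: prod_pos ep)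
  have Bzp: "0 < Bz y z" unfolding Bz_def by (auto intro!: prod_pos bp)
  have Ep: "0 < E w c / real N" using S(1) Npos by (intro divide_pos_pos) auto
  have pWZp: "0 < pWZ w z"
  proof -
    have "E w c / real N * ez c z \<le> pWZ w z"
      unfolding pWZ_def using c w
      by (intro member_le_sum[where f="\<lambda>c. E w c / real N * ez c z"] mult_nonneg_nonneg divide_nonneg_nonneg E_nonneg ez_nonneg) auto
    then show ?thesis using Ep ezp by (smt (verit) mult_pos_pos)
  qed
  have pZp: "0 < pZ z"
  proof -
    have "pWZ w z \<le> pZ z" unfolding pZ_def using w by (intro member_le_sum pWZ_nonneg) auto
    then show ?thesis using pWZp by linarith
  qed
  have gp: "0 < g w y" by (rule g_pos)
  have Qp: "0 < Q w c y z" unfolding Q_def using Ep S(2) by (rule mult_pos_pos)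
  define X where "X = pZ z * g w y / (pWZ w z * (\<Prod>j<M. \<Prod>t<n. r j t))"
  have Xp: "0 < X" unfolding X_def using pZp gp pWZp Rp by simp
  have lX: "log 2 (pZ z / pWZ w z) + log 2 (g w y) - (\<Sum>j<M. \<Sum>t<n. phi j (c j t) (y j t) (z j t)) = log 2 X"
    unfolding sumphi X_def using pZp gp pWZp Rp
    by (simp add: log_divide_pos log_mult_pos)
  have l2: "log 2 X \<le> (X - 1) / ln 2"
    unfolding log_def by (intro divide_right_mono ln_le_minus_one Xp) simp
  have Rq: "(\<Prod>j<M. \<Prod>t<n. r j t) = Aq c y z / (ez c z * Bz y z)"
    unfolding r_def Aq_def ez_def Bz_def by (simp add: prod_dividef prod.distrib)
  have QX: "Q w c y z * X = E w c / real N * pZ z * g w y * ez c z * Bz y z / pWZ w z"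
    unfolding X_def Rq Q_def using S(2) ezp Bzp pWZp Npos by (simp add: field_simps)
  have "Q w c y z * (log 2 (pZ z / pWZ w z) + log 2 (g w y) - (\<Sum>j<M. \<Sum>t<n. phi j (c j t) (y j t) (z j t)))
     = Q w c y z * log 2 X" by (simp only: lX)
  also have "\<dots> \<le> Q w c y z * ((X - 1) / ln 2)" using mult_left_mono[OF l2 less_imp_le[OF Qp]] .
  also have "\<dots> = (Q w c y z * X - Q w c y z) / ln 2" by (simp add: field_simps)
  finally show ?thesis unfolding QX .
qed


lemma sum4_split:
  fixes f h k :: "'a \<Rightarrow> 'b \<Rightarrow> 'c \<Rightarrow> 'd \<Rightarrow> real"
  shows "(\<Sum>a\<in>A. \<Sum>b\<in>B. \<Sum>c\<in>C. \<Sum>d\<in>DD. f a b c d + h a b c d - k a b c d)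
     = (\<Sum>a\<in>A. \<Sum>b\<in>B. \<Sum>c\<in>C. \<Sum>d\<in>DD. f a b c d) + (\<Sum>a\<in>A. \<Sum>b\<in>B. \<Sum>c\<in>C. \<Sum>d\<in>DD. h a b c d)
       - (\<Sum>a\<in>A. \<Sum>b\<in>B. \<Sum>c\<in>C. \<Sum>d\<in>DD. k a b c d)"
  by (simp add: sum.distrib sum_subtractf)

lemma sum4_div:
  fixes f h :: "'a \<Rightarrow> 'b \<Rightarrow> 'c \<Rightarrow> 'd \<Rightarrow> real"
  shows "(\<Sum>a\<in>A. \<Sum>b\<in>B. \<Sum>c\<in>C. \<Sum>d\<in>DD. (f a b c d - h a b c d) / \<kappa>)
     = ((\<Sum>a\<in>A. \<Sum>b\<in>B. \<Sum>c\<in>C. \<Sum>d\<in>DD. f a b c d) - (\<Sum>a\<in>A. \<Sum>b\<in>B. \<Sum>c\<in>C. \<Sum>d\<in>DD. h a b c d)) / \<kappa>"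
  by (simp add: sum_divide_distrib[symmetric] sum_subtractf diff_divide_distrib)

lemma big_sum_le:
  "(\<Sum>w\<in>{1..N}. \<Sum>c\<in>seqs M n. \<Sum>y\<in>seqs M n. \<Sum>z\<in>seqs M n.
      E w c / real N * pZ z * g w y * ez c z * Bz y z / pWZ w z) \<le> 1"
proof -
  define G where "G w y z = pZ z * g w y * Bz y z / pWZ w z" for w y z
  have "(\<Sum>w\<in>{1..N}. \<Sum>c\<in>seqs M n. \<Sum>y\<in>seqs M n. \<Sum>z\<in>seqs M n.
      E w c / real N * pZ z * g w y * ez c z * Bz y z / pWZ w z)
    = (\<Sum>w\<in>{1..N}. \<Sum>c\<in>seqs M n. \<Sum>y\<in>seqs M n. \<Sum>z\<in>seqs M n. (E w c / real N * ez c z) * G w y z)"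
    unfolding G_def by (intro sum.cong refl) (simp add: field_simps)
  also have "\<dots> = (\<Sum>w\<in>{1..N}. \<Sum>y\<in>seqs M n. \<Sum>z\<in>seqs M n. \<Sum>c\<in>seqs M n. (E w c / real N * ez c z) * G w y z)"
  proof (rule sum.cong[OF refl])
    fix w
    show "(\<Sum>c\<in>seqs M n. \<Sum>y\<in>seqs M n. \<Sum>z\<in>seqs M n. (E w c / real N * ez c z) * G w y z)
        = (\<Sum>y\<in>seqs M n. \<Sum>z\<in>seqs M n. \<Sum>c\<in>seqs M n. (E w c / real N * ez c z) * G w y z)"
      by (rule sum.swap[THEN trans], rule sum.cong[OF refl], rule sum.swap)
  qed
  also have "\<dots> = (\<Sum>w\<in>{1..N}. \<Sum>y\<in>seqs M n. \<Sum>z\<in>seqs M n. pWZ w z * G w y z)"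
    unfolding pWZ_def by (simp add: sum_distrib_right)
  also have "\<dots> \<le> (\<Sum>w\<in>{1..N}. \<Sum>y\<in>seqs M n. \<Sum>z\<in>seqs M n. pZ z * g w y * Bz y z)"
  proof (intro sum_mono)
    fix w y z assume w: "w \<in> {1..N}"
    have x0: "0 \<le> pZ z * g w y * Bz y z"
      by (intro mult_nonneg_nonneg pZ_nonneg Bz_nonneg less_imp_le[OF g_pos])
    show "pWZ w z * G w y z \<le> pZ z * g w y * Bz y z"
      unfolding G_def using x0 pWZ_nonneg[OF w] by (cases "pWZ w z = 0") auto
  qed
  also have "\<dots> = (\<Sum>y\<in>seqs M n. \<Sum>z\<in>seqs M n. pZ z * Bz y z * (\<Sum>w\<in>{1..N}. g w y))"
  proof -
    have "(\<Sum>w\<in>{1..N}. \<Sum>y\<in>seqs M n. \<Sum>z\<in>seqs M n. pZ z * g w y * Bz y z)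
       = (\<Sum>y\<in>seqs M n. \<Sum>z\<in>seqs M n. \<Sum>w\<in>{1..N}. pZ z * g w y * Bz y z)"
      by (rule sum.swap[THEN trans], rule sum.cong[OF refl], rule sum.swap)
    then show ?thesis by (simp add: sum_distrib_left mult.commute mult.left_commute)
  qed
  also have "\<dots> \<le> (\<Sum>y\<in>seqs M n. \<Sum>z\<in>seqs M n. pZ z * Bz y z)"
    by (intro sum_mono mult_left_le g_sum mult_nonneg_nonneg pZ_nonneg Bz_nonneg)
  also have "\<dots> = (\<Sum>z\<in>seqs M n. pZ z * (\<Sum>y\<in>seqs M n. Bz y z))"
    by (subst sum.swap) (simp add: sum_distrib_left)
  also have "\<dots> \<le> (\<Sum>z\<in>seqs M n. pZ z)"
    by (intro sum_mono mult_left_le Bz_sum pZ_nonneg)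
  also have "\<dots> = 1" by (rule pZ_sum)
  finally show ?thesis .
qed

theorem main_ineq:
  assumes err: "err_prob K M n W N E D i0 \<le> eps"
  shows "cond_ent_WYe K M n W N E
     \<le> real n * (\<Sum>j<M. cmi (qj j)) + (- log 2 (1 - eps) + eps * (- log 2 (eps / real N)))"
proof -
  let ?S = "\<lambda>F. (\<Sum>w\<in>{1..N}. \<Sum>c\<in>seqs M n. \<Sum>y\<in>seqs M n. \<Sum>z\<in>seqs M n. F w c y z)"
  have A: "?S (\<lambda>w c y z. Q w c y z * log 2 (pZ z / pWZ w z) + Q w c y z * log 2 (g w y)
          - Q w c y z * (\<Sum>j<M. \<Sum>t<n. phi j (c j t) (y j t) (z j t)))
      \<le> ?S (\<lambda>w c y z. (E w c / real N * pZ z * g w y * ez c z * Bz y z / pWZ w z - Q w c y z) / ln 2)"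
  proof (intro sum_mono)
    fix w and c :: "nat \<Rightarrow> nat \<Rightarrow> 'x" and y z :: "nat \<Rightarrow> nat \<Rightarrow> 'y"
    assume w: "w \<in> {1..N}" and c: "c \<in> seqs M n"
    have e: "Q w c y z * log 2 (pZ z / pWZ w z) + Q w c y z * log 2 (g w y)
          - Q w c y z * (\<Sum>j<M. \<Sum>t<n. phi j (c j t) (y j t) (z j t))
        = Q w c y z * (log 2 (pZ z / pWZ w z) + log 2 (g w y) - (\<Sum>j<M. \<Sum>t<n. phi j (c j t) (y j t) (z j t)))"
      by (simp only: distrib_left right_diff_distrib)
    show "Q w c y z * log 2 (pZ z / pWZ w z) + Q w c y z * log 2 (g w y)
          - Q w c y z * (\<Sum>j<M. \<Sum>t<n. phi j (c j t) (y j t) (z j t))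
        \<le> (E w c / real N * pZ z * g w y * ez c z * Bz y z / pWZ w z - Q w c y z) / ln 2"
      unfolding e by (rule pointwise[OF w c])
  qed
  also have "\<dots> = (?S (\<lambda>w c y z. E w c / real N * pZ z * g w y * ez c z * Bz y z / pWZ w z) - ?S Q) / ln 2"
    by (rule sum4_div)
  also have "\<dots> \<le> 0"
    using big_sum_le Q_sum by (simp add: divide_nonpos_pos)
  finally have B: "?S (\<lambda>w c y z. Q w c y z * log 2 (pZ z / pWZ w z) + Q w c y z * log 2 (g w y)
          - Q w c y z * (\<Sum>j<M. \<Sum>t<n. phi j (c j t) (y j t) (z j t))) \<le> 0" .
  have C: "?S (\<lambda>w c y z. Q w c y z * log 2 (pZ z / pWZ w z) + Q w c y z * log 2 (g w y)
          - Q w c y z * (\<Sum>j<M. \<Sum>t<n. phi j (c j t) (y j t) (z j t)))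
     = cond_ent_WYe K M n W N E + ?S (\<lambda>w c y z. Q w c y z * log 2 (g w y)) - real n * (\<Sum>j<M. cmi (qj j))"
    unfolding sum4_split H_eq phi_eq ..
  have D: "?S (\<lambda>w c y z. Q w c y z * log 2 (g w y)) = - ?S (\<lambda>w c y z. Q w c y z * (- log 2 (g w y)))"
    by (simp add: sum_negf)
  show ?thesis using B C D g_bound[OF err] by linarith
qed


lemma main_ineq2:
  assumes err: "err_prob K M n W N E D i0 \<le> eps"
  shows "cond_ent_WYe K M n W N E
     \<le> real n * (\<Sum>j<M. cmi (joint_xyz K (pbar M n N E j) (P' j) i0)) + (- log 2 (1 - eps) + eps * (- log 2 (eps / real N)))"
  using main_ineq[OF err] unfolding qj_def .

end

lemma cmi_le:
  fixes q :: "'a::finite \<Rightarrow> 'b::finite \<Rightarrow> 'c::finite \<Rightarrow> real"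
  assumes nn: "\<And>x y z. 0 \<le> q x y z" and s: "(\<Sum>x\<in>UNIV. \<Sum>y\<in>UNIV. \<Sum>z\<in>UNIV. q x y z) \<le> 1"
  shows "cmi q \<le> real (card (UNIV::'a set) * card (UNIV::'b set) * card (UNIV::'c set)) / ln 2"
proof -
  have T: "(let pxz = (\<Sum>y'\<in>UNIV. q x y' z); pyz = (\<Sum>x'\<in>UNIV. q x' y z);
          pz = (\<Sum>x'\<in>UNIV. \<Sum>y'\<in>UNIV. q x' y' z)
      in if q x y z = 0 then 0 else q x y z * log 2 (q x y z * pz / (pxz * pyz))) \<le> 1 / ln 2" for x y z
  proof -
    define a where "a = q x y z"
    define P where "P = (\<Sum>y'\<in>UNIV. q x y' z)"
    define Y where "Y = (\<Sum>x'\<in>UNIV. q x' y z)"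
    define Z where "Z = (\<Sum>x'\<in>UNIV. \<Sum>y'\<in>UNIV. q x' y' z)"
    have aP: "a \<le> P" unfolding a_def P_def by (rule member_le_sum) (auto intro: nn)
    have aY: "a \<le> Y" unfolding a_def Y_def by (rule member_le_sum) (auto intro: nn)
    have PZ: "P \<le> Z" unfolding P_def Z_def by (rule member_le_sum[where f="\<lambda>x. \<Sum>y'\<in>UNIV. q x y' z"]) (auto intro: nn sum_nonneg)
    have Z1: "Z \<le> 1"
    proof -
      have "Z \<le> (\<Sum>x'\<in>UNIV. \<Sum>y'\<in>UNIV. \<Sum>z'\<in>UNIV. q x' y' z')"
        unfolding Z_def by (intro sum_mono member_le_sum[where f="\<lambda>z'. q _ _ z'"]) (auto intro: nn)
      then show ?thesis using s by linarith
    qed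
    show ?thesis
    proof (cases "a = 0")
      case True then show ?thesis unfolding a_def Let_def by simp
    next
      case False
      then have ap: "0 < a" using nn[of x y z] unfolding a_def by linarith
      have Pp: "0 < P" "0 < Y" "0 < Z" using ap aP aY PZ by linarith+
      define v where "v = a * Z / (P * Y)"
      have vp: "0 < v" unfolding v_def using ap Pp by simp
      have lv: "log 2 v \<le> (v - 1) / ln 2"
        unfolding log_def by (intro divide_right_mono ln_le_minus_one vp) simp
      have "a * a * Z \<le> P * Y * 1" using aP aY Z1 ap Pp by (intro mult_mono) auto
      then have av: "a * v \<le> 1" unfolding v_def using Pp by (simp add: field_simps)
      have "a * log 2 v \<le> a * ((v - 1) / ln 2)" using mult_left_mono[OF lv] ap by simp
      also have "\<dots> \<le> a * v / ln 2" using ap by (simp add: field_simps)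
      also have "\<dots> \<le> 1 / ln 2" using av by (intro divide_right_mono) auto
      finally show ?thesis unfolding Let_def using False
        by (simp add: a_def[symmetric] P_def[symmetric] Y_def[symmetric] Z_def[symmetric] v_def)
    qed
  qed
  have "cmi q \<le> (\<Sum>x\<in>(UNIV::'a set). \<Sum>y\<in>(UNIV::'b set). \<Sum>z\<in>(UNIV::'c set). 1 / ln 2)"
    unfolding cmi_def by (intro sum_mono T)
  also have "\<dots> = real (card (UNIV::'a set) * card (UNIV::'b set) * card (UNIV::'c set)) / ln 2" by simp
  finally show ?thesis .
qed

lemma joint_nonneg:
  assumes "is_letter_channel K V" "\<And>x. 0 \<le> px x"
  shows "0 \<le> joint_xyz K px V i x y z"
  using assms unfolding joint_xyz_def is_letter_channel_def
  by (intro mult_nonneg_nonneg sum_nonneg) auto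

lemma joint_sum:
  assumes V: "is_letter_channel K V" and p: "(\<Sum>x\<in>UNIV. px x) = 1"
  shows "(\<Sum>x\<in>UNIV. \<Sum>y\<in>UNIV. \<Sum>z\<in>UNIV. joint_xyz K px V i x (y::'y::finite) z) = 1"
proof -
  have inner: "(\<Sum>y\<in>UNIV. \<Sum>z\<in>UNIV. \<Sum>ys\<in>Yr K. if ys i = y then V x ys z else 0) = 1" for x
  proof -
    have "(\<Sum>y\<in>UNIV. \<Sum>z\<in>UNIV. \<Sum>ys\<in>Yr K. if ys i = y then V x ys z else 0)
        = (\<Sum>y\<in>UNIV. \<Sum>ys\<in>Yr K. if ys i = y then (\<Sum>z\<in>UNIV. V x ys z) else 0)"
      by (intro sum.cong refl) (subst sum.swap, auto intro!: sum.cong)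
    also have "\<dots> = (\<Sum>ys\<in>Yr K. \<Sum>z\<in>UNIV. V x ys z)" by (rule sum_cond_all)
    also have "\<dots> = 1" using V unfolding is_letter_channel_def by simp
    finally show ?thesis .
  qed
  have "(\<Sum>x\<in>UNIV. \<Sum>y\<in>UNIV. \<Sum>z\<in>UNIV. joint_xyz K px V i x y z)
      = (\<Sum>x\<in>UNIV. px x * (\<Sum>y\<in>UNIV. \<Sum>z\<in>UNIV. \<Sum>ys\<in>Yr K. if ys i = y then V x ys z else 0))"
    unfolding joint_xyz_def by (simp add: sum_distrib_left)
  also have "\<dots> = 1" using p by (simp add: inner)
  finally show ?thesis .
qed

lemma num_msgs_ge1: "1 \<le> num_msgs n R"
proof -
  have "0 < 2 powr (real n * R)" by simp
  then have c: "1 \<le> \<lceil>2 powr (real n * R)\<rceil>" by (simp add: one_le_ceiling)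
  then show ?thesis unfolding num_msgs_def by arith
qed

lemma log_num_msgs: "log 2 (real (num_msgs n R)) \<le> real n * \<bar>R\<bar> + 1"
proof -
  define v where "v = 2 powr (real n * R)"
  define u where "u = 2 powr (real n * \<bar>R\<bar>)"
  have v0: "0 < v" unfolding v_def by simp
  have vu: "v \<le> u" unfolding v_def u_def by (intro powr_mono) (auto intro: mult_left_mono)
  have u1: "1 \<le> u" unfolding u_def by (rule ge_one_powr_ge_zero) auto
  have "real (num_msgs n R) = of_int \<lceil>v\<rceil>" unfolding num_msgs_def v_def[symmetric] using v0 by simp
  also have "\<dots> \<le> v + 1" by linarith
  also have "\<dots> \<le> 2 powr (real n * \<bar>R\<bar> + 1)" using vu u1 unfolding u_def by (simp add: powr_add)
  finally have N: "real (num_msgs n R) \<le> 2 powr (real n * \<bar>R\<bar> + 1)" .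
  have "log 2 (real (num_msgs n R)) \<le> log 2 (2 powr (real n * \<bar>R\<bar> + 1))"
    using N num_msgs_ge1[of n R] by (subst log_le_cancel_iff) auto
  also have "\<dots> = real n * \<bar>R\<bar> + 1" by simp
  finally show ?thesis .
qed


lemma delta_lim:
  "((\<lambda>e::real. e + - log 2 (1 - e) + - (e * log 2 e) + e * (\<bar>R\<bar> + 1)) \<longlongrightarrow> 0) (at_right 0)"
  unfolding log_def by real_asymp

lemma achievable_neg:
  fixes W :: "nat \<Rightarrow> 'x::finite \<Rightarrow> (nat \<Rightarrow> 'y::finite) \<Rightarrow> 'y \<Rightarrow> real"
  shows "achievable K M W (-1)"
proof -
  have N1: "num_msgs n R = 1" if "R \<le> 0" for n and R :: real
  proof -
    have v0: "0 < (2::real) powr (real n * R)" by simp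
    have "(2::real) powr (real n * R) \<le> 2 powr 0"
      using that by (intro powr_mono) (auto simp: mult_nonneg_nonpos)
    then have v1: "(2::real) powr (real n * R) \<le> 1" by simp
    have "\<lceil>(2::real) powr (real n * R)\<rceil> = 1" using v0 v1 by (simp add: ceiling_eq_iff)
    then show ?thesis unfolding num_msgs_def by simp
  qed
  define c0 :: "nat \<Rightarrow> nat \<Rightarrow> 'x" where "c0 = (\<lambda>j\<in>{0..<M}. \<lambda>t\<in>{0..<1}. undefined)"
  have c0s: "c0 \<in> seqs M 1" unfolding c0_def seqs_def by auto
  define E :: "nat \<Rightarrow> (nat \<Rightarrow> nat \<Rightarrow> 'x) \<Rightarrow> real" where "E w c = (if c = c0 then 1 else 0)" for w c
  define D :: "nat \<Rightarrow> (nat \<Rightarrow> nat \<Rightarrow> 'y) \<Rightarrow> nat" where "D i y = 1" for i y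
  have enc: "valid_encoder M 1 1 E" unfolding valid_encoder_def E_def using c0s by (simp add: sum.delta')
  have dec: "valid_decoders K M 1 1 D" unfolding valid_decoders_def D_def by simp
  have err: "err_prob K M 1 W 1 E D i = 0" for i unfolding err_prob_def D_def by simp
  have ce: "cond_ent_WYe K M 1 W 1 E = 0" unfolding cond_ent_WYe_def Let_def
    by (intro sum.neutral ballI) (auto split: if_splits)
  show ?thesis unfolding achievable_def
  proof (intro allI impI)
    fix e :: real assume e: "0 < e"
    show "\<exists>n>0. \<exists>(E :: nat \<Rightarrow> (nat \<Rightarrow> nat \<Rightarrow> 'x) \<Rightarrow> real) (D :: nat \<Rightarrow> (nat \<Rightarrow> nat \<Rightarrow> 'y) \<Rightarrow> nat).
        valid_encoder M n (num_msgs n (- 1)) E \<and> valid_decoders K M n (num_msgs n (- 1)) D \<and>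
        (\<forall>i<K. err_prob K M n W (num_msgs n (- 1)) E D i \<le> e) \<and>
        - 1 - e \<le> cond_ent_WYe K M n W (num_msgs n (- 1)) E / real n"
      unfolding N1 using enc dec err ce e
      by (intro exI[of _ 1] conjI exI[of _ E] exI[of _ D]) (auto simp: N1)
  qed
qed


theorem lemma1:
  fixes W :: "nat \<Rightarrow> 'x::finite \<Rightarrow> (nat \<Rightarrow> 'y::finite) \<Rightarrow> 'y \<Rightarrow> real"
    and K M :: nat
  assumes "1 \<le> K" and "1 \<le> M"
    and "\<forall>j<M. is_letter_channel K (W j)"
  shows "secrecy_capacity K M W \<le> secrecy_bound K M W"
proof -
  note K1 = assms(1) and Wch = assms(3)
  define F where "F P' p = Min ((\<lambda>i. \<Sum>j<M. cmi (joint_xyz K (p j) (P' j) i)) ` {0..<K})"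
    for P' :: "nat \<Rightarrow> 'x \<Rightarrow> (nat \<Rightarrow> 'y) \<Rightarrow> 'y \<Rightarrow> real" and p :: "nat \<Rightarrow> 'x \<Rightarrow> real"
  have SB: "secrecy_bound K M W = (INF P'\<in>compatible_channels K M W. SUP p\<in>input_dists M. F P' p)"
    unfolding secrecy_bound_def F_def ..
  define Cb where "Cb = real (card (UNIV::'x set) * card (UNIV::'y set) * card (UNIV::'y set)) / ln 2"
  have WCC: "W \<in> compatible_channels K M W"
    unfolding compatible_channels_def same_marginals_def using Wch by auto
  show ?thesis unfolding SB secrecy_capacity_def
  proof (rule cINF_greatest)
    show "compatible_channels K M W \<noteq> {}" using WCC by auto
  next
    fix P' assume P': "P' \<in> compatible_channels K M W"
    have P'ch: "\<And>j. j < M \<Longrightarrow> is_letter_channel K (P' j)"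
      and marg: "\<And>j. j < M \<Longrightarrow> same_marginals K (W j) (P' j)"
      using P' unfolding compatible_channels_def by auto
    have Fb: "F P' p \<le> real M * Cb" if p: "p \<in> input_dists M" for p
    proof -
      have "F P' p \<le> (\<Sum>j<M. cmi (joint_xyz K (p j) (P' j) 0))"
        unfolding F_def using K1 by (intro Min_le) auto
      also have "\<dots> \<le> (\<Sum>j<M. Cb)"
      proof (intro sum_mono)
        fix j assume "j \<in> {..<M}"
        then have j: "j < M" by simp
        have pj: "\<And>x. 0 \<le> p j x" "(\<Sum>x\<in>UNIV. p j x) = 1" using p j unfolding input_dists_def by auto
        show "cmi (joint_xyz K (p j) (P' j) 0) \<le> Cb"
          unfolding Cb_def
          by (rule cmi_le) (auto intro: joint_nonneg[OF P'ch[OF j] pj(1)] simp: joint_sum[OF P'ch[OF j] pj(2)])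
      qed
      also have "\<dots> = real M * Cb" by simp
      finally show ?thesis .
    qed
    then have bdd: "bdd_above (F P' ` input_dists M)" by (intro bdd_aboveI) auto
    show "Sup {R. achievable K M W R} \<le> (SUP p\<in>input_dists M. F P' p)"
    proof (rule cSup_least)
      show "{R. achievable K M W R} \<noteq> {}" using achievable_neg[of K M W] by auto
    next
      fix R assume "R \<in> {R. achievable K M W R}"
      then have ach: "achievable K M W R" by simp
      define S where "S = (SUP p\<in>input_dists M. F P' p)"
      define \<delta> where "\<delta> e = e + - log 2 (1 - e) + - (e * log 2 e) + e * (\<bar>R\<bar> + 1)" for e :: real
      have key: "R \<le> S + \<delta> e" if e: "0 < e" "e < 1" for e
      proof -
        obtain n E D where n: "n > 0"
          and enc: "valid_encoder M n (num_msgs n R) E"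
          and dec: "valid_decoders K M n (num_msgs n R) D"
          and err: "\<forall>i<K. err_prob K M n W (num_msgs n R) E D i \<le> e"
          and H: "cond_ent_WYe K M n W (num_msgs n R) E / real n \<ge> R - e"
          using ach e(1) unfolding achievable_def by blast
        define N where "N = num_msgs n R"
        have Npos: "1 \<le> N" unfolding N_def by (rule num_msgs_ge1)
        interpret c0: conv K M n N P' W E D 0 e
          using P'ch marg enc dec K1 n Npos e unfolding N_def by unfold_locales auto
        have pID: "pbar M n N E \<in> input_dists M"
          unfolding input_dists_def using c0.pbar_nonneg c0.pbar_sum by auto
        have a0: "0 \<le> - log 2 (1 - e)" using e by simp
        have b0: "0 \<le> - (e * log 2 e)" using e by (simp add: mult_nonneg_nonpos)
        have lN: "log 2 (real N) \<le> real n * \<bar>R\<bar> + 1" unfolding N_def by (rule log_num_msgs)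
        have nr: "1 \<le> real n" using n by simp
        have each: "R - \<delta> e \<le> (\<Sum>j<M. cmi (joint_xyz K (pbar M n N E j) (P' j) i))" if i: "i < K" for i
        proof -
          interpret ci: conv K M n N P' W E D i e
            using P'ch marg enc dec i n Npos e unfolding N_def by unfold_locales auto
          define Sm where "Sm = (\<Sum>j<M. cmi (joint_xyz K (pbar M n N E j) (P' j) i))"
          have Hb: "cond_ent_WYe K M n W N E \<le> real n * Sm + (- log 2 (1 - e) + e * (- log 2 (e / real N)))"
            unfolding Sm_def using ci.main_ineq2 err i unfolding N_def by auto
          have ceq: "e * (- log 2 (e / real N)) = - (e * log 2 e) + e * log 2 (real N)"
            using e Npos by (simp add: log_divide_pos algebra_simps)
          have d1: "e * log 2 (real N) \<le> real n * (e * (\<bar>R\<bar> + 1))"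
          proof -
            have "e * log 2 (real N) \<le> e * (real n * \<bar>R\<bar> + 1)" using lN e by (intro mult_left_mono) auto
            also have "\<dots> \<le> e * (real n * \<bar>R\<bar> + real n)" using nr e by (intro mult_left_mono) auto
            finally show ?thesis by (simp add: algebra_simps)
          qed
          have d2: "- log 2 (1 - e) \<le> real n * (- log 2 (1 - e))" using mult_right_mono[OF nr a0] by simp
          have d3: "- (e * log 2 e) \<le> real n * (- (e * log 2 e))" using mult_right_mono[OF nr b0] by simp
          have HR: "real n * (R - e) \<le> cond_ent_WYe K M n W N E"
            using H n unfolding N_def by (simp add: pos_le_divide_eq mult.commute)
          have "real n * (R - e) \<le> real n * (Sm + - log 2 (1 - e) + - (e * log 2 e) + e * (\<bar>R\<bar> + 1))"
            using HR Hb ceq d1 d2 d3 by (simp add: algebra_simps)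
          then have "R - e \<le> Sm + - log 2 (1 - e) + - (e * log 2 e) + e * (\<bar>R\<bar> + 1)"
            using n by (simp add: mult_le_cancel_left_pos)
          then show ?thesis unfolding Sm_def \<delta>_def by linarith
        qed
        have "R - \<delta> e \<le> F P' (pbar M n N E)"
          unfolding F_def using K1 each by (subst Min_ge_iff) auto
        also have "\<dots> \<le> S" unfolding S_def by (rule cSUP_upper[OF pID bdd])
        finally show ?thesis by linarith
      qed
      have lim: "((\<lambda>e. S + \<delta> e) \<longlongrightarrow> S + 0) (at_right 0)"
        unfolding \<delta>_def by (intro tendsto_add tendsto_const delta_lim)
      have ev: "eventually (\<lambda>e. R \<le> S + \<delta> e) (at_right (0::real))"
        unfolding eventually_at_right_field using key by (intro exI[of _ 1]) auto
      have "R \<le> S + 0" by (rule tendsto_lowerbound[OF lim ev]) simp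
      then show "R \<le> (SUP p\<in>input_dists M. F P' p)" unfolding S_def by simp
    qed
  qed
qed

end
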